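(* Let $X$ be a stacked simplicial complex of dimension $d$, fix a codimension one face $c$ with associated $X_m$, $V_m$, and let $m\ge 0$. (1) Let $\mathcal F$ be a partition of the facets of $X$, let $\sim'_V$ be the associated relation on vertices and $\sim_V$ the equivalence relation it generates. If $v\ne w$ are in $V_m$ and $v\sim_V w$, then there is a sequence $v=v_0,v_1,\dots,v_t=w$ with all $v_i\in V_m$ and $v_{i-1}\sim'_V v_i$ for $1\le i\le t$. (2) Let $\mathcal V$ be a partition of the vertices of $X$ into independent sets, let $\sim'_F$ be the associated relation on facets and $\sim_F$ the equivalence relation it generates. If $f\ne g$ are in $X_m$ and $f\sim_F g$, then there is a sequence $f=f_0,f_1,\dots,f_t=g$ with all $f_i\in X_m$ and $f_{i-1}\sim'_F f_i$ for $1\le i\le t$.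
   Context: A simplicial complex $X$ on a finite vertex set $V$ is a family of subsets (faces) of $V$ closed under taking subsets, every element of $V$ lying in some face; facets are inclusion-maximal faces. $X$ is pure of dimension $d$ if every facet has $d+1$ elements; a codimension one face is a face with $d$ elements. $X$ is stacked if it is pure of some dimension $d$ and its facets can be ordered $F_0,\dots,F_k$ such that for each $p\ge1$, $F_p$ contains exactly one vertex $v_p$ not in $F_0\cup\dots\cup F_{p-1}$, and $F_p\setminus\{v_p\}\subseteq F_j$ for some $j<p$. A walk is a sequence of facets $f_1,\dots,f_p$ ($p\ge1$) with each $f_i\cap f_{i+1}$ of exactly $d$ elements; a path is a walk in which the faces $f_i\cap f_{i+1}$, $1\le i<p$, are pairwise distinct; in a stacked complex there is a unique path between any two facets. For faces $h,k$ with $h\cup k$ not contained in any codimension one face, a path between $h$ and $k$, written $h\,|\,f_1,\dots,f_p\,|\,k$, is a path with $h\subseteq f_1$, $k\subseteq f_p$ and, if $p\ge2$, $h\not\subseteq f_1\cap f_2$, $k\not\subseteq f_p\cap f_{p-1}$; in a stacked complex it exists and is unique. A set of vertices is independent if no two of its distinct elements lie in a common facet. Relation $\sim'_V$ (from a facet partition $\mathcal F$): for distinct vertices $v,w$ not lying in a common facet, with unique path $v\,|\,f_1,\dots,f_p\,|\,w$, $v\sim'_V w$ iff $f_1,f_p$ lie in the same part $Q$ of $\mathcal F$ and none of $f_2,\dots,f_{p-1}$ lies in $Q$. Relation $\sim'_F$ (from a vertex partition $\mathcal V$ into independent sets): for distinct facets $f,f'$ with unique path $f=f_1,\dots,f_p=f'$,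 $v$ the element of $f_1\setminus f_2$ and $w$ the element of $f_p\setminus f_{p-1}$, $f\sim'_F f'$ iff $v,w$ lie in the same part $P$ of $\mathcal V$ and none of $f_2,\dots,f_{p-1}$ contains a vertex of $P$. Distance neighbourhoods: the distance from a facet $f$ to $c$ is the minimal $r\ge1$ such that there is a walk $f_1,\dots,f_r$ with $f_1=f$ and $c\subseteq f_r$; $X_m$ is the set of facets at distance $\le m$ from $c$; $V_0$ is the vertex set of $c$ and, for $m\ge1$, $V_m$ is the set of vertices of facets in $X_m$. *)

theory Defs
  imports Main "HOL-Library.Disjoint_Sets"
begin

definition vertices :: "'a set set \<Rightarrow> 'a set" where
  "vertices X = \<Union>X"

definition simplicial_complex :: "'a set set \<Rightarrow> bool" where
  "simplicial_complex X \<longleftrightarrow> finite (\<Union>X) \<and> (\<forall>F\<in>X. \<forall>G. G \<subseteq> F \<longrightarrow> G \<in> X)"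

definition facets :: "'a set set \<Rightarrow> 'a set set" where
  "facets X = {F \<in> X. \<forall>G\<in>X. F \<subseteq> G \<longrightarrow> G = F}"

definition pure_dim :: "'a set set \<Rightarrow> nat \<Rightarrow> bool" where
  "pure_dim X d \<longleftrightarrow> (\<forall>F\<in>facets X. card F = Suc d)"

definition stacked :: "'a set set \<Rightarrow> nat \<Rightarrow> bool" where
  "stacked X d \<longleftrightarrow> simplicial_complex X \<and> pure_dim X d \<and>
     (\<exists>Fs. Fs \<noteq> [] \<and> distinct Fs \<and> set Fs = facets X \<and>
        (\<forall>p. 0 < p \<and> p < length Fs \<longrightarrow>
           (\<exists>v. Fs ! p - \<Union>(set (take p Fs)) = {v} \<and> (\<exists>j<p. Fs ! p - {v} \<subseteq> Fs ! j))))"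

definition codim_one_face :: "'a set set \<Rightarrow> nat \<Rightarrow> 'a set \<Rightarrow> bool" where
  "codim_one_face X d c \<longleftrightarrow> c \<in> X \<and> card c = d"

definition walk :: "'a set set \<Rightarrow> nat \<Rightarrow> 'a set list \<Rightarrow> bool" where
  "walk X d fs \<longleftrightarrow> fs \<noteq> [] \<and> set fs \<subseteq> facets X \<and>
     (\<forall>i. Suc i < length fs \<longrightarrow> card (fs ! i \<inter> fs ! Suc i) = d)"

definition ridges :: "'a set list \<Rightarrow> 'a set list" where
  "ridges fs = map (\<lambda>i. fs ! i \<inter> fs ! Suc i) [0..<length fs - 1]"

definition path :: "'a set set \<Rightarrow> nat \<Rightarrow> 'a set list \<Rightarrow> bool" where
  "path X d fs \<longleftrightarrow> walk X d fs \<and> distinct (ridges fs)"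

definition path_between :: "'a set set \<Rightarrow> nat \<Rightarrow> 'a set \<Rightarrow> 'a set list \<Rightarrow> 'a set \<Rightarrow> bool" where
  "path_between X d h fs k \<longleftrightarrow> path X d fs \<and> h \<subseteq> hd fs \<and> k \<subseteq> last fs \<and>
     (2 \<le> length fs \<longrightarrow> \<not> h \<subseteq> fs ! 0 \<inter> fs ! 1 \<and> \<not> k \<subseteq> last fs \<inter> fs ! (length fs - 2))"

definition in_common_facet :: "'a set set \<Rightarrow> 'a \<Rightarrow> 'a \<Rightarrow> bool" where
  "in_common_facet X v w \<longleftrightarrow> (\<exists>F\<in>facets X. v \<in> F \<and> w \<in> F)"

definition independent :: "'a set set \<Rightarrow> 'a set \<Rightarrow> bool" where
  "independent X S \<longleftrightarrow> (\<forall>v\<in>S. \<forall>w\<in>S. v \<noteq> w \<longrightarrow> \<not> in_common_facet X v w)"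

definition simV' :: "'a set set \<Rightarrow> nat \<Rightarrow> 'a set set set \<Rightarrow> 'a \<Rightarrow> 'a \<Rightarrow> bool" where
  "simV' X d PF v w \<longleftrightarrow> v \<in> vertices X \<and> w \<in> vertices X \<and> v \<noteq> w \<and> \<not> in_common_facet X v w \<and>
     (\<exists>fs. path_between X d {v} fs {w} \<and>
        (\<exists>Q\<in>PF. hd fs \<in> Q \<and> last fs \<in> Q \<and> (\<forall>i. 0 < i \<and> i < length fs - 1 \<longrightarrow> fs ! i \<notin> Q)))"

definition simF' :: "'a set set \<Rightarrow> nat \<Rightarrow> 'a set set \<Rightarrow> 'a set \<Rightarrow> 'a set \<Rightarrow> bool" where
  "simF' X d PV f g \<longleftrightarrow> f \<in> facets X \<and> g \<in> facets X \<and> f \<noteq> g \<and>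
     (\<exists>fs. path X d fs \<and> hd fs = f \<and> last fs = g \<and>
        (\<exists>v w. fs ! 0 - fs ! 1 = {v} \<and> last fs - fs ! (length fs - 2) = {w} \<and>
           (\<exists>P\<in>PV. v \<in> P \<and> w \<in> P \<and> (\<forall>i. 0 < i \<and> i < length fs - 1 \<longrightarrow> fs ! i \<inter> P = {}))))"

definition gen_equiv :: "('b \<Rightarrow> 'b \<Rightarrow> bool) \<Rightarrow> 'b \<Rightarrow> 'b \<Rightarrow> bool" where
  "gen_equiv R = (\<lambda>x y. R x y \<or> R y x)\<^sup>*\<^sup>*"

text \<open>X_m: facets at distance at most m from c (distance = least r \<ge> 1 with a walk of r facets
  starting at f and ending in a facet containing c).\<close>
definition Xm :: "'a set set \<Rightarrow> nat \<Rightarrow> 'a set \<Rightarrow> nat \<Rightarrow> 'a set set" where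
  "Xm X d c m = {f \<in> facets X. \<exists>fs. walk X d fs \<and> length fs \<le> m \<and> hd fs = f \<and> c \<subseteq> last fs}"

definition Vm :: "'a set set \<Rightarrow> nat \<Rightarrow> 'a set \<Rightarrow> nat \<Rightarrow> 'a set" where
  "Vm X d c m = (if m = 0 then c else \<Union>(Xm X d c m))"

definition chain_in :: "('b \<Rightarrow> 'b \<Rightarrow> bool) \<Rightarrow> 'b set \<Rightarrow> 'b \<Rightarrow> 'b \<Rightarrow> bool" where
  "chain_in R A x y \<longleftrightarrow> (\<exists>xs. xs \<noteq> [] \<and> hd xs = x \<and> last xs = y \<and> set xs \<subseteq> A \<and>
      (\<forall>i. Suc i < length xs \<longrightarrow> R (xs ! i) (xs ! Suc i)))"

end

theory Submission
  imports Defs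
begin

lemma walk_iff: "walk X d fs \<longleftrightarrow> fs \<noteq> [] \<and> set fs \<subseteq> facets X \<and> successively (\<lambda>a b. card (a \<inter> b) = d) fs"
  unfolding walk_def successively_conv_nth by auto

lemma ridges_Nil[simp]: "ridges [] = []" by (simp add: ridges_def)
lemma ridges_single[simp]: "ridges [a] = []" by (simp add: ridges_def)
lemma ridges_Cons2[simp]: "ridges (a # b # xs) = (a \<inter> b) # ridges (b # xs)"
  unfolding ridges_def by (simp add: upt_conv_Cons map_Suc_upt[symmetric] del: upt_Suc)

lemma length_ridges[simp]: "length (ridges xs) = length xs - 1" by (simp add: ridges_def)
lemma nth_ridges: "i < length xs - 1 \<Longrightarrow> ridges xs ! i = xs ! i \<inter> xs ! Suc i"
  by (simp add: ridges_def)

lemma ridges_append: "xs \<noteq> [] \<Longrightarrow> ys \<noteq> [] \<Longrightarrow> ridges (xs @ ys) = ridges xs @ [last xs \<inter> hd ys] @ ridges ys"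
proof (induction xs rule: induct_list012)
  case (2 x) then show ?case by (cases ys) auto
next
  case (3 x y zs) then show ?case by auto
qed simp

lemma ridges_rev: "ridges (rev xs) = rev (ridges xs)"
proof (induction xs rule: induct_list012)
  case (3 x y zs)
  have "ridges (rev (x # y # zs)) = ridges (rev (y # zs) @ [x])" by simp
  also have "\<dots> = ridges (rev (y#zs)) @ [y \<inter> x]" by (subst ridges_append) (auto simp: last_rev)
  finally show ?case using 3 by (auto simp: Int_commute)
qed auto

lemma set_ridges_sub: "t \<in> set (ridges xs) \<Longrightarrow> (\<exists>b\<in>set (tl xs). t \<subseteq> b) \<and> (\<exists>a\<in>set (butlast xs). t \<subseteq> a)"
  by (induction xs rule: induct_list012) auto


locale stk =
  fixes X :: "'a set set" and d :: nat
  assumes st: "stacked X d"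
begin

abbreviation "F \<equiv> facets X"

lemma sc: "simplicial_complex X" using st by (simp add: stacked_def)
lemma finU: "finite (\<Union>X)" using sc by (simp add: simplicial_complex_def)
lemma finX: "finite X" using finU by (simp add: finite_UnionD)

lemma facet_card: "f \<in> F \<Longrightarrow> card f = Suc d"
  using st by (simp add: stacked_def pure_dim_def)
lemma facet_fin: "f \<in> F \<Longrightarrow> finite f"
proof -
  assume "f \<in> F" then have "card f = Suc d" by (rule facet_card)
  then show "finite f" by (metis card.infinite nat.distinct(1))
qed
lemma facet_in: "f \<in> F \<Longrightarrow> f \<in> X" by (simp add: facets_def)
lemma facet_max: "f \<in> F \<Longrightarrow> g \<in> X \<Longrightarrow> f \<subseteq> g \<Longrightarrow> g = f" by (auto simp: facets_def)

lemma facet_eq_card: assumes "f \<in> F" "g \<in> F" "f \<subseteq> g" shows "f = g"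
  using facet_max[OF assms(1) facet_in[OF assms(2)] assms(3)] by simp

lemma two_facets_ridge:
  assumes f: "f \<in> F" and g: "g \<in> F" and ne: "f \<noteq> g" and r: "r \<subseteq> f" "r \<subseteq> g" "card r = d"
  shows "f \<inter> g = r"
proof -
  have fin: "finite (f \<inter> g)" using facet_fin[OF f] by simp
  have le: "card (f \<inter> g) \<le> d"
  proof (rule ccontr)
    assume "\<not> ?thesis"
    then have "card (f \<inter> g) \<ge> card f" using facet_card[OF f] by simp
    moreover have "card (f \<inter> g) \<le> card f" using card_mono[OF facet_fin[OF f], of "f\<inter>g"] by simp
    ultimately have "card (f \<inter> g) = card f" by linarith
    then have "f \<inter> g = f" using card_subset_eq[OF facet_fin[OF f], of "f \<inter> g"] by simp
    then have "f \<subseteq> g" by auto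
    then show False using facet_eq_card[OF f g] ne by simp
  qed
  have "r \<subseteq> f \<inter> g" using r by auto
  moreover have "card r \<ge> card (f \<inter> g)" using le r(3) by simp
  moreover have "card r \<le> card (f \<inter> g)" using card_mono[OF fin] calculation(1) by simp
  ultimately show ?thesis using card_subset_eq[OF fin, of r] by simp
qed

lemma card_self_ne: "f \<in> F \<Longrightarrow> card (f \<inter> f) \<noteq> d" using facet_card by simp

lemma adj_ne: "f \<in> F \<Longrightarrow> card (f \<inter> g) = d \<Longrightarrow> f \<noteq> g" using facet_card by (metis Int_absorb n_not_Suc_n)

lemma adj_diff: assumes "f \<in> F" "g \<in> F" "card (f \<inter> g) = d" shows "\<exists>v. f - g = {v}"
proof -
  have "card (f - g) = card f - card (f \<inter> g)"
    using card_Diff_subset_Int[of f g] facet_fin[OF assms(1)] by (simp add: Diff_Int2 card_Diff_subset Int_commute)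
  then have "card (f - g) = 1" using facet_card[OF assms(1)] assms(3) by simp
  then show ?thesis by (simp add: card_1_singleton_iff)
qed

lemma adj_diff_elem: assumes "f \<in> F" "g \<in> F" "card (f \<inter> g) = d" "v \<in> f" "v \<notin> g"
  shows "f - g = {v}"
proof -
  obtain u where u: "f - g = {u}" using adj_diff[OF assms(1-3)] by blast
  then have "v \<in> {u}" using assms(4,5) by blast
  then show ?thesis using u by simp
qed

lemma card_minus_elem: "f \<in> F \<Longrightarrow> v \<in> f \<Longrightarrow> card (f - {v}) = d"
  using facet_card facet_fin by simp

lemma ridge_eq_minus: assumes "f \<in> F" "g \<in> F" "card (f \<inter> g) = d" "v \<in> f" "v \<notin> g"
  shows "f \<inter> g = f - {v}"
  using adj_diff_elem[OF assms] by (metis Diff_Diff_Int)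

lemma face_in_facet: assumes "s \<in> X" shows "\<exists>f\<in>F. s \<subseteq> f"
proof -
  let ?S = "{t \<in> X. s \<subseteq> t}"
  have fin: "finite ?S" using finX by simp
  have ne: "?S \<noteq> {}" using assms by auto
  obtain t where t0: "t \<in> ?S" "card t = Max (card ` ?S)"
    using Max_in[of "card ` ?S"] fin ne by (metis (no_types, lifting) finite_imageI image_iff image_is_empty)
  then have t: "t \<in> ?S" "\<forall>u\<in>?S. card u \<le> card t" using fin by auto
  have "t \<in> X \<and> (\<forall>G\<in>X. t \<subseteq> G \<longrightarrow> G = t)"
  proof (intro conjI ballI impI)
    show "t \<in> X" using t by simp
    fix G assume G: "G \<in> X" "t \<subseteq> G"
    then have "G \<in> ?S" using t by auto
    then have "card G \<le> card t" using t by simp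
    moreover have "finite G" using G finU by (meson Sup_upper finite_subset)
    ultimately show "G = t" using card_seteq[of G t] G by simp
  qed
  then have "t \<in> F" by (simp add: facets_def)
  moreover have "s \<subseteq> t" using t(1) by simp
  ultimately show ?thesis by blast
qed

lemma vertex_in_facet: assumes "x \<in> vertices X" shows "\<exists>f\<in>F. x \<in> f"
proof -
  obtain s where "s \<in> X" "x \<in> s" using assms unfolding vertices_def by blast
  then show ?thesis using face_in_facet[of s] by blast
qed

lemma facet_sub_vertices: "f \<in> F \<Longrightarrow> f \<subseteq> vertices X"
  unfolding vertices_def using facet_in by (simp add: Union_upper)

end

lemma ridges_drop: "ridges (drop k xs) = drop k (ridges xs)"
  by (rule nth_equalityI) (auto simp: nth_ridges add.commute add_Suc_right)

lemma ridges_take: "ridges (take k xs) = take (k - 1) (ridges xs)"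
proof (rule nth_equalityI)
  show "length (ridges (take k xs)) = length (take (k - 1) (ridges xs))" by simp
next
  fix i assume "i < length (ridges (take k xs))"
  then have i: "i < min (length xs) k - 1" by simp
  then have "ridges (take k xs) ! i = take k xs ! i \<inter> take k xs ! Suc i" by (simp add: nth_ridges)
  also have "\<dots> = xs ! i \<inter> xs ! Suc i" using i by simp
  also have "\<dots> = ridges xs ! i" using i by (simp add: nth_ridges)
  also have "\<dots> = take (k - 1) (ridges xs) ! i" using i by simp
  finally show "ridges (take k xs) ! i = take (k - 1) (ridges xs) ! i" .
qed

context stk begin

lemma walk_Cons2: "walk X d (a # b # xs) \<longleftrightarrow> a \<in> F \<and> card (a \<inter> b) = d \<and> walk X d (b # xs)"
  unfolding walk_iff by auto

lemma walk_single[simp]: "walk X d [a] \<longleftrightarrow> a \<in> F"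
  unfolding walk_iff by auto

lemma walk_ne: "walk X d xs \<Longrightarrow> xs \<noteq> []" unfolding walk_iff by simp
lemma walk_set: "walk X d xs \<Longrightarrow> set xs \<subseteq> F" unfolding walk_iff by simp
lemma walk_hd: "walk X d xs \<Longrightarrow> hd xs \<in> F" unfolding walk_iff by (auto intro: hd_in_set)
lemma walk_last: "walk X d xs \<Longrightarrow> last xs \<in> F" unfolding walk_iff by (auto intro: last_in_set)
lemma walk_nth: "walk X d xs \<Longrightarrow> i < length xs \<Longrightarrow> xs ! i \<in> F" unfolding walk_iff by (auto intro: nth_mem)
lemma walk_adj: "walk X d xs \<Longrightarrow> Suc i < length xs \<Longrightarrow> card (xs ! i \<inter> xs ! Suc i) = d"
  unfolding walk_def by blast

lemma walk_append:
  "walk X d xs \<Longrightarrow> walk X d ys \<Longrightarrow> card (last xs \<inter> hd ys) = d \<Longrightarrow> walk X d (xs @ ys)"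
  unfolding walk_iff by (auto simp: successively_append_iff)

lemma walk_appendD1: "walk X d (xs @ ys) \<Longrightarrow> xs \<noteq> [] \<Longrightarrow> walk X d xs"
  unfolding walk_iff by (auto simp: successively_append_iff)
lemma walk_appendD2: "walk X d (xs @ ys) \<Longrightarrow> ys \<noteq> [] \<Longrightarrow> walk X d ys"
  unfolding walk_iff by (auto simp: successively_append_iff)

lemma walk_rev: "walk X d (rev xs) \<longleftrightarrow> walk X d xs"
  unfolding walk_iff by (auto simp: Int_commute)

lemma walk_take: "walk X d xs \<Longrightarrow> 0 < k \<Longrightarrow> walk X d (take k xs)"
  by (metis append_take_drop_id walk_appendD1 walk_ne take_eq_Nil neq0_conv)
lemma walk_drop: "walk X d xs \<Longrightarrow> k < length xs \<Longrightarrow> walk X d (drop k xs)"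
  by (metis append_take_drop_id walk_appendD2 drop_eq_Nil not_le)
lemma walk_tl: "walk X d xs \<Longrightarrow> tl xs \<noteq> [] \<Longrightarrow> walk X d (tl xs)"
  by (metis list.collapse walk_ne append_Cons append_Nil walk_appendD2)
lemma walk_butlast: "walk X d xs \<Longrightarrow> butlast xs \<noteq> [] \<Longrightarrow> walk X d (butlast xs)"
  by (metis append_butlast_last_id walk_appendD1 butlast.simps(1))

lemma walk_append_eq:
  assumes "walk X d xs" "walk X d ys" "last xs = hd ys"
  shows "walk X d (xs @ tl ys)"
proof (cases "tl ys = []")
  case True then show ?thesis using assms(1) by simp
next
  case False
  obtain y z zs where ys: "ys = y # z # zs" using False walk_ne[OF assms(2)]
    by (metis list.collapse)
  have "card (y \<inter> z) = d" using assms(2) unfolding ys walk_Cons2 by simp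
  moreover have "walk X d (z # zs)" using assms(2) unfolding ys walk_Cons2 by simp
  ultimately show ?thesis using walk_append[OF assms(1), of "z # zs"] assms(3) ys by simp
qed

lemma walk_join:
  assumes A: "walk X d A" and B: "walk X d B" and c: "last A = hd B \<or> card (last A \<inter> hd B) = d"
  shows "\<exists>C. walk X d C \<and> hd C = hd A \<and> last C = last B \<and> set C \<subseteq> set A \<union> set B"
proof (cases "last A = hd B")
  case True
  have w: "walk X d (A @ tl B)" using walk_append_eq[OF A B True] .
  have h: "hd (A @ tl B) = hd A" using walk_ne[OF A] by simp
  have l: "last (A @ tl B) = last B"
  proof (cases "tl B = []")
    case True
    then have "B = [hd B]" using walk_ne[OF B] by (metis list.collapse)
    then show ?thesis using \<open>last A = hd B\<close> True by (metis append_Nil2 last_ConsL)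
  next
    case False
    then show ?thesis using last_tl[of B] by simp
  qed
  have s: "set (A @ tl B) \<subseteq> set A \<union> set B" using list.set_sel(2)[of B] by (cases B) auto
  show ?thesis using w h l s by blast
next
  case False
  then have "card (last A \<inter> hd B) = d" using c by simp
  then have w: "walk X d (A @ B)" using walk_append[OF A B] by simp
  have h: "hd (A @ B) = hd A" using walk_ne[OF A] by simp
  have l: "last (A @ B) = last B" using walk_ne[OF B] by simp
  have s: "set (A @ B) \<subseteq> set A \<union> set B" by simp
  show ?thesis using w h l s by blast
qed

lemma walk_join_ridge:
  assumes A: "walk X d A" and B: "walk X d B" and r: "r \<subseteq> last A" "r \<subseteq> hd B" "card r = d"
  shows "\<exists>C. walk X d C \<and> hd C = hd A \<and> last C = last B \<and> set C \<subseteq> set A \<union> set B"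
proof -
  have "last A = hd B \<or> card (last A \<inter> hd B) = d"
  proof (cases "last A = hd B")
    case False
    then have "last A \<inter> hd B = r" using two_facets_ridge[OF walk_last[OF A] walk_hd[OF B] _ r] by simp
    then show ?thesis using r(3) by simp
  qed simp
  then show ?thesis using walk_join[OF A B] by blast
qed

lemma path_rev: "path X d (rev xs) \<longleftrightarrow> path X d xs"
  unfolding path_def by (simp add: walk_rev ridges_rev)

lemma path_drop: "path X d xs \<Longrightarrow> k < length xs \<Longrightarrow> path X d (drop k xs)"
  unfolding path_def using walk_drop ridges_drop distinct_drop by metis
lemma path_take: "path X d xs \<Longrightarrow> 0 < k \<Longrightarrow> path X d (take k xs)"
  unfolding path_def using walk_take ridges_take distinct_take by metis
lemma path_tl: assumes "path X d xs" "tl xs \<noteq> []" shows "path X d (tl xs)"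
proof -
  have "1 < length xs" using assms(2) by (cases xs) auto
  then show ?thesis using path_drop[OF assms(1), of 1] by (simp add: drop_Suc)
qed
lemma path_butlast: assumes "path X d xs" "butlast xs \<noteq> []" shows "path X d (butlast xs)"
proof -
  have "0 < length xs - 1" using assms(2) by (cases xs) auto
  then show ?thesis using path_take[OF assms(1), of "length xs - 1"] by (simp add: butlast_conv_take)
qed

lemma path_appendD1: assumes "path X d (xs @ ys)" "xs \<noteq> []" shows "path X d xs"
  using path_take[OF assms(1), of "length xs"] assms(2) by simp
lemma path_appendD2: assumes "path X d (xs @ ys)" "ys \<noteq> []" shows "path X d ys"
  using path_drop[OF assms(1), of "length xs"] assms(2) by simp

lemma path_Cons2: "path X d (a # b # xs) \<longleftrightarrow> a \<in> F \<and> card (a \<inter> b) = d \<and> path X d (b # xs) \<and> a \<inter> b \<notin> set (ridges (b # xs))"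
  unfolding path_def walk_Cons2 by auto

lemma path_walk: "path X d xs \<Longrightarrow> walk X d xs" by (simp add: path_def)

end

lemma exit_index:
  assumes "xs \<noteq> []" "P (xs ! 0)" "\<not> P (last xs)"
  shows "\<exists>i. Suc i < length xs \<and> P (xs ! i) \<and> \<not> P (xs ! Suc i)"
  using assms
proof (induction xs)
  case Nil then show ?case by simp
next
  case (Cons a xs)
  show ?case
  proof (cases "xs = []")
    case True then show ?thesis using Cons by simp
  next
    case False
    show ?thesis
    proof (cases "P (xs ! 0)")
      case True
      then obtain i where "Suc i < length xs" "P (xs ! i)" "\<not> P (xs ! Suc i)" using Cons False by auto
      then show ?thesis by (intro exI[of _ "Suc i"]) simp
    next
      case False2: False
      then show ?thesis using Cons False by (intro exI[of _ 0]) (simp add: hd_conv_nth)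
    qed
  qed
qed

lemma distinct_nth_notin_drop: "distinct xs \<Longrightarrow> k < length xs \<Longrightarrow> xs ! k \<notin> set (drop (Suc k) xs)"
  by (metis Cons_nth_drop_Suc distinct.simps(2) distinct_drop)

context stk begin

definition stk_ok where "stk_ok Fs \<longleftrightarrow> Fs \<noteq> [] \<and> distinct Fs \<and> set Fs = facets X \<and>
        (\<forall>p. 0 < p \<and> p < length Fs \<longrightarrow>
           (\<exists>v. Fs ! p - \<Union>(set (take p Fs)) = {v} \<and> (\<exists>j<p. Fs ! p - {v} \<subseteq> Fs ! j)))"

lemma ex_Fs: "\<exists>Fs. stk_ok Fs" using st unfolding stacked_def stk_ok_def by blast

lemma newv:
  assumes "stk_ok Fs" "0 < p" "p < length Fs"
  shows "\<exists>v. v \<in> Fs ! p \<and> (\<forall>q<p. v \<notin> Fs ! q) \<and> (\<exists>j<p. Fs ! p - {v} \<subseteq> Fs ! j)"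
proof -
  obtain v j where v: "Fs ! p - \<Union>(set (take p Fs)) = {v}" "j < p" "Fs ! p - {v} \<subseteq> Fs ! j"
    using assms unfolding stk_ok_def by blast
  have "v \<in> Fs ! p" using v(1) by blast
  moreover have "\<forall>q<p. v \<notin> Fs ! q"
  proof (intro allI impI)
    fix q assume "q < p"
    then have "Fs ! q \<in> set (take p Fs)" using assms(3) by (simp add: in_set_conv_nth) (metis length_take min.absorb4 min_less_iff_conj nth_take order.strict_trans)
    then show "v \<notin> Fs ! q" using v(1) by blast
  qed
  ultimately show ?thesis using v by blast
qed

lemma Fs_facet: "stk_ok Fs \<Longrightarrow> p < length Fs \<Longrightarrow> Fs ! p \<in> F"
  unfolding stk_ok_def by (metis nth_mem)

lemma Fs_ex: "stk_ok Fs \<Longrightarrow> f \<in> F \<Longrightarrow> \<exists>p<length Fs. Fs ! p = f"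
  unfolding stk_ok_def by (metis in_set_conv_nth)

lemma Fs_inj: "stk_ok Fs \<Longrightarrow> p < length Fs \<Longrightarrow> q < length Fs \<Longrightarrow> Fs ! p = Fs ! q \<Longrightarrow> p = q"
  unfolding stk_ok_def using nth_eq_iff_index_eq by blast

lemma maxnb:
  assumes "S \<subseteq> F" "S \<noteq> {}"
  shows "\<exists>g\<in>S. \<exists>\<rho>. \<forall>b\<in>S. card (b \<inter> g) = d \<longrightarrow> b \<inter> g = \<rho>"
proof -
  obtain Fs where Fs: "stk_ok Fs" using ex_Fs by blast
  let ?I = "{q. q < length Fs \<and> Fs ! q \<in> S}"
  have fin: "finite ?I" by simp
  obtain s where "s \<in> S" using assms(2) by blast
  then obtain q0 where "q0 < length Fs" "Fs ! q0 = s" using Fs_ex[OF Fs] assms(1) by blast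
  then have ne: "?I \<noteq> {}" using \<open>s \<in> S\<close> by blast
  define p where "p = Max ?I"
  have pI: "p \<in> ?I" using Max_in[OF fin ne] p_def by simp
  have pmax: "\<And>q. q \<in> ?I \<Longrightarrow> q \<le> p" using Max_ge[OF fin] p_def by simp
  let ?g = "Fs ! p"
  show ?thesis
  proof (cases "p = 0")
    case True
    have "\<forall>b\<in>S. card (b \<inter> ?g) = d \<longrightarrow> b \<inter> ?g = {}"
    proof (intro ballI impI)
      fix b assume b: "b \<in> S" "card (b \<inter> ?g) = d"
      obtain q where q: "q < length Fs" "Fs ! q = b" using Fs_ex[OF Fs] assms(1) b(1) by blast
      then have "q \<le> p" using pmax b(1) by blast
      then have "q = 0" using True by simp
      then have "b = ?g" using q True by simp
      then show "b \<inter> ?g = {}" using b(2) card_self_ne[of b] assms(1) b(1) by auto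
    qed
    then show ?thesis using pI by blast
  next
    case False
    obtain v j where v: "v \<in> ?g" "\<forall>q<p. v \<notin> Fs ! q"
      using newv[OF Fs, of p] False pI by auto
    have "\<forall>b\<in>S. card (b \<inter> ?g) = d \<longrightarrow> b \<inter> ?g = ?g - {v}"
    proof (intro ballI impI)
      fix b assume b: "b \<in> S" "card (b \<inter> ?g) = d"
      obtain q where q: "q < length Fs" "Fs ! q = b" using Fs_ex[OF Fs] assms(1) b(1) by blast
      then have "q \<le> p" using pmax b(1) by blast
      moreover have "q \<noteq> p" using q b(2) card_self_ne[of b] assms(1) b(1) by auto
      ultimately have "v \<notin> b" using v q by auto
      have gF: "?g \<in> F" using pI assms(1) by blast
      have bF: "b \<in> F" using b(1) assms(1) by blast
      have "?g \<inter> b = ?g - {v}" using ridge_eq_minus[OF gF bF _ v(1) \<open>v \<notin> b\<close>] b(2) by (simp add: Int_commute)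
      then show "b \<inter> ?g = ?g - {v}" by (simp add: Int_commute)
    qed
    then show ?thesis using pI by blast
  qed
qed

lemma NC1:
  assumes P: "path X d fs" and len: "2 \<le> length fs" and hl: "hd fs = last fs"
  shows False
proof -
  have W: "walk X d fs" using P path_walk by blast
  have D: "distinct (ridges fs)" using P by (simp add: path_def)
  obtain g \<rho> where g: "g \<in> set fs" and gr: "\<forall>b\<in>set fs. card (b \<inter> g) = d \<longrightarrow> b \<inter> g = \<rho>"
    using maxnb[of "set fs"] walk_set[OF W] walk_ne[OF W] by auto
  show False
  proof (cases "g = hd fs")
    case True
    obtain t where t: "fs = g # t" using True walk_ne[OF W] by (metis list.collapse)
    have tne: "t \<noteq> []" using t len by auto
    have lt: "last t = g" using t hl True tne by (metis last_ConsR list.sel(1))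
    obtain mid where mid: "t = mid @ [g]" using lt tne by (metis append_butlast_last_id)
    show False
    proof (cases "mid = []")
      case True
      then have "fs = [g, g]" using t mid by simp
      then show False using W walk_Cons2 card_self_ne by auto
    next
      case False
      have fs: "fs = [g] @ mid @ [g]" using t mid by simp
      have r1: "ridges ([g] @ (mid @ [g])) = [g \<inter> hd mid] @ ridges (mid @ [g])"
        using ridges_append[of "[g]" "mid @ [g]"] False by simp
      have r2: "ridges (mid @ [g]) = ridges mid @ [last mid \<inter> g]"
        using ridges_append[of mid "[g]"] False by simp
      have "ridges fs = [g \<inter> hd mid] @ ridges mid @ [last mid \<inter> g]"
        using r1 r2 fs by simp
      moreover have "g \<inter> hd mid = \<rho>"
      proof -
        have "card (g \<inter> hd mid) = d" using W unfolding fs using False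
          by (metis append_Cons append_Nil list.collapse walk_Cons2)
        moreover have "hd mid \<in> set fs" using fs False by simp
        ultimately show ?thesis using gr by (metis Int_commute)
      qed
      moreover have "last mid \<inter> g = \<rho>"
      proof -
        have "walk X d (mid @ [g])" using walk_appendD2[of "[g]" "mid @ [g]"] W fs by simp
        then have "card (last mid \<inter> g) = d" using False unfolding walk_iff
          by (simp add: successively_append_iff)
        moreover have "last mid \<in> set fs" using fs False by simp
        ultimately show ?thesis using gr by blast
      qed
      ultimately show False using D by simp
    qed
  next
    case False
    obtain ys zs where s: "fs = ys @ g # zs" using g by (metis split_list)
    have ys: "ys \<noteq> []" using False s by auto
    have zs: "zs \<noteq> []"
    proof
      assume "zs = []"
      then have "last fs = g" using s by simp
      then show False using False hl by simp
    qed
    have "ridges fs = ridges ys @ [last ys \<inter> g] @ ridges (g # zs)"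
      unfolding s using ys by (simp add: ridges_append)
    also have "ridges (g # zs) = (g \<inter> hd zs) # ridges zs"
      using zs by (metis list.collapse ridges_Cons2)
    finally have rf: "ridges fs = ridges ys @ [last ys \<inter> g] @ (g \<inter> hd zs) # ridges zs" .
    have w1: "card (last ys \<inter> g) = d" using W unfolding s walk_iff using ys
      by (simp add: successively_append_iff)
    have w2: "card (g \<inter> hd zs) = d" using W unfolding s walk_iff using zs
      by (simp add: successively_append_iff successively_Cons)
    have "last ys \<inter> g = \<rho>" using gr w1 s ys by simp
    moreover have "hd zs \<inter> g = \<rho>"
    proof -
      have "hd zs \<in> set fs" using s zs by simp
      moreover have "card (hd zs \<inter> g) = d" using w2 by (simp add: Int_commute)
      ultimately show ?thesis using gr by blast
    qed
    ultimately have "last ys \<inter> g = g \<inter> hd zs" by (simp add: Int_commute)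
    then show False using D rf by simp
  qed
qed

lemma path_hd_ne_last: "path X d fs \<Longrightarrow> 2 \<le> length fs \<Longrightarrow> hd fs \<noteq> last fs"
  using NC1 by blast

lemma distinct_path: assumes "path X d fs" shows "distinct fs"
proof (rule ccontr)
  assume "\<not> distinct fs"
  then obtain xs ys zs y where s: "fs = xs @ [y] @ ys @ [y] @ zs" using not_distinct_decomp by blast
  have s2: "fs = xs @ ((y # ys @ [y]) @ zs)" using s by simp
  have "path X d ((y # ys @ [y]) @ zs)" using path_appendD2[OF assms[unfolded s2]] by simp
  then have "path X d (y # ys @ [y])" using path_appendD1 by blast
  then show False using NC1[of "y # ys @ [y]"] by simp
qed

lemma RED:
  assumes "walk X d W"
  shows "\<exists>P. path X d P \<and> hd P = hd W \<and> last P = last W \<and> set P \<subseteq> set W"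
  using assms
proof (induction W)
  case Nil then show ?case using walk_ne by blast
next
  case (Cons x W')
  show ?case
  proof (cases "W' = []")
    case True
    then have "path X d [x]" using Cons.prems by (simp add: path_def)
    then show ?thesis using True by (intro exI[of _ "[x]"]) simp
  next
    case False
    have wW': "walk X d W'" using Cons.prems False by (metis list.sel(3) walk_tl)
    obtain P' where P': "path X d P'" "hd P' = hd W'" "last P' = last W'" "set P' \<subseteq> set W'"
      using Cons.IH[OF wW'] by blast
    have P'ne: "P' \<noteq> []" using P'(1) path_walk walk_ne by blast
    have xF: "x \<in> F" using Cons.prems walk_hd by fastforce
    have adj: "card (x \<inter> hd P') = d" using Cons.prems False P'(2) by (metis list.collapse walk_Cons2)
    show ?thesis
    proof (cases "x \<inter> hd P' \<in> set (ridges P')")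
      case False
      have "path X d (x # P')" using path_Cons2[of x "hd P'" "tl P'"] P'ne xF adj False P'(1) by simp
      moreover have "last (x # P') = last (x # W')" using P'ne False P'(3) \<open>W' \<noteq> []\<close> by simp
      ultimately show ?thesis using P'(4) by (intro exI[of _ "x # P'"]) auto
    next
      case True
      then obtain k where k: "k < length P' - 1" "ridges P' ! k = x \<inter> hd P'"
        by (metis in_set_conv_nth length_ridges)
      have rk: "x \<inter> hd P' = P' ! k \<inter> P' ! Suc k" using k nth_ridges by metis
      let ?b = "P' ! Suc k"
      let ?D = "drop (Suc k) P'"
      have Dp: "path X d ?D" using path_drop[OF P'(1)] k by simp
      have hdD: "hd ?D = ?b" using k by (simp add: hd_drop_conv_nth)
      have lastD: "last ?D = last P'" using k by simp
      have setD: "set ?D \<subseteq> set P'" by (simp add: set_drop_subset)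
      show ?thesis
      proof (cases "x = ?b")
        case True
        then show ?thesis using Dp hdD lastD setD P' \<open>W' \<noteq> []\<close> by (intro exI[of _ ?D]) auto
      next
        case False
        have bF: "?b \<in> F" using walk_nth[OF path_walk[OF P'(1)]] k by simp
        have sub1: "x \<inter> hd P' \<subseteq> x" "x \<inter> hd P' \<subseteq> ?b" using rk by auto
        have xb: "x \<inter> ?b = x \<inter> hd P'" using two_facets_ridge[OF xF bF False sub1 adj] .
        have Dne: "?D \<noteq> []" using k by simp
        have "ridges P' ! k \<notin> set (drop (Suc k) (ridges P'))"
          using distinct_nth_notin_drop[of "ridges P'" k] P'(1) k by (simp add: path_def)
        then have nr: "x \<inter> ?b \<notin> set (ridges ?D)" using xb k(2) by (simp add: ridges_drop)
        have "path X d (x # ?D)"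
          using path_Cons2[of x ?b "tl ?D"] Dne hdD xF xb adj nr Dp by (metis list.collapse)
        moreover have "last (x # ?D) = last (x # W')" using Dne lastD P'(3) \<open>W' \<noteq> []\<close> by simp
        ultimately show ?thesis using setD P'(4) by (intro exI[of _ "x # ?D"]) auto
      qed
    qed
  qed
qed

end

context stk begin

lemma CYC:
  assumes h: "h \<in> F" and rh: "\<rho> \<subseteq> h" "r \<subseteq> h" "card \<rho> = d" "card r = d" "\<rho> \<noteq> r"
    and W: "walk X d W" "h \<notin> set W" "\<rho> \<subseteq> hd W" "r \<subseteq> last W"
  shows False
proof -
  obtain P where P: "path X d P" "hd P = hd W" "last P = last W" "set P \<subseteq> set W"
    using RED[OF W(1)] by blast
  have Pne: "P \<noteq> []" using P(1) path_walk walk_ne by blast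
  have hP: "h \<notin> set P" using P(4) W(2) by blast
  have ex1: "\<exists>z\<in>set P. \<rho> \<subseteq> z" using P(2) W(3) Pne hd_in_set by metis
  obtain ys a zs where s1: "P = ys @ a # zs" "\<rho> \<subseteq> a" "\<forall>z\<in>set zs. \<not> \<rho> \<subseteq> z"
    using split_list_last_prop[OF ex1] by blast
  have P1: "path X d (a # zs)" using path_appendD2[of ys "a # zs"] P(1) s1(1) by simp
  have l1: "last (a # zs) = last P" using s1(1) by simp
  have ex2: "\<exists>z\<in>set (a # zs). r \<subseteq> z" using l1 P(3) W(4) by (metis last_in_set list.distinct(1))
  obtain ys' b zs' where s2: "a # zs = ys' @ b # zs'" "r \<subseteq> b" "\<forall>y\<in>set ys'. \<not> r \<subseteq> y"
    using split_list_first_prop[OF ex2] by blast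
  define P2 where "P2 = ys' @ [b]"
  have P2p: "path X d P2" using path_appendD1[of "ys' @ [b]" zs'] P1 s2(1) unfolding P2_def by simp
  have hdP2: "hd P2 = a" using s2(1) unfolding P2_def by (cases ys') auto
  have lastP2: "last P2 = b" unfolding P2_def by simp
  have butP2: "butlast P2 = ys'" unfolding P2_def by simp
  have tlP2: "set (tl P2) \<subseteq> set zs"
  proof (cases ys')
    case Nil then show ?thesis unfolding P2_def by simp
  next
    case (Cons u us)
    then have "zs = us @ b # zs'" using s2(1) by simp
    then show ?thesis unfolding P2_def using Cons by auto
  qed
  have aP: "a \<in> set P" using s1(1) by simp
  have bP: "b \<in> set P" using s1(1) s2(1) by (metis in_set_conv_decomp set_ConsD set_append Un_iff list.set_intros(1))
  have aF: "a \<in> F" using aP walk_set[OF path_walk[OF P(1)]] by blast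
  have bF: "b \<in> F" using bP walk_set[OF path_walk[OF P(1)]] by blast
  have ha: "h \<inter> a = \<rho>" using two_facets_ridge[OF h aF _ rh(1) s1(2) rh(3)] hP aP by blast
  have hb: "b \<inter> h = r" using two_facets_ridge[OF bF h _ s2(2) rh(2) rh(4)] hP bP by blast
  have P2ne: "P2 \<noteq> []" unfolding P2_def by simp
  define C where "C = [h] @ P2 @ [h]"
  have wC: "walk X d C"
  proof -
    have "walk X d (P2 @ [h])" using walk_append[OF path_walk[OF P2p], of "[h]"] h hb lastP2 rh(4)
      by (simp add: Int_commute)
    then show ?thesis unfolding C_def using walk_append[of "[h]" "P2 @ [h]"] h ha hdP2 rh(3) P2ne
      by simp
  qed
  have rC: "ridges C = [\<rho>] @ ridges P2 @ [r]"
  proof -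
    have "ridges (P2 @ [h]) = ridges P2 @ [r]" using ridges_append[of P2 "[h]"] P2ne lastP2 hb by simp
    moreover have "ridges ([h] @ (P2 @ [h])) = [h \<inter> hd P2] @ ridges (P2 @ [h])"
      using ridges_append[of "[h]" "P2 @ [h]"] P2ne by simp
    ultimately show ?thesis unfolding C_def using ha hdP2 by simp
  qed
  have d1: "distinct (ridges P2)" using P2p by (simp add: path_def)
  have n1: "\<rho> \<notin> set (ridges P2)"
  proof
    assume "\<rho> \<in> set (ridges P2)"
    then obtain z where "z \<in> set (tl P2)" "\<rho> \<subseteq> z" using set_ridges_sub by blast
    then show False using tlP2 s1(3) by blast
  qed
  have n2: "r \<notin> set (ridges P2)"
  proof
    assume "r \<in> set (ridges P2)"
    then obtain z where "z \<in> set (butlast P2)" "r \<subseteq> z" using set_ridges_sub by blast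
    then show False using butP2 s2(3) by blast
  qed
  have "distinct (ridges C)" using rC d1 n1 n2 rh(5) by simp
  then have "path X d C" using wC by (simp add: path_def)
  moreover have "2 \<le> length C" unfolding C_def by simp
  moreover have "hd C = last C" unfolding C_def by simp
  ultimately show False using NC1 by blast
qed

lemma walk_Cons_adj: "walk X d W \<Longrightarrow> a \<in> F \<Longrightarrow> card (a \<inter> hd W) = d \<Longrightarrow> walk X d (a # W)"
  using walk_append[of "[a]" W] by simp

lemma star_to_root:
  assumes Fs: "stk_ok Fs" and q0: "q0 < length Fs" "x \<in> Fs ! q0" "\<forall>q<q0. x \<notin> Fs ! q"
  shows "p < length Fs \<Longrightarrow> x \<in> Fs ! p \<Longrightarrow> \<exists>W. walk X d W \<and> hd W = Fs ! p \<and> last W = Fs ! q0 \<and> (\<forall>f\<in>set W. x \<in> f)"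
proof (induction p rule: less_induct)
  case (less p)
  show ?case
  proof (cases "p = q0")
    case True
    then show ?thesis using Fs_facet[OF Fs less.prems(1)] less.prems(2)
      by (intro exI[of _ "[Fs ! p]"]) simp
  next
    case False
    have "q0 < p" using False q0(3) less.prems(2) by (meson linorder_neqE_nat)
    then obtain v j where v: "v \<in> Fs ! p" "\<forall>q<p. v \<notin> Fs ! q" "j < p" "Fs ! p - {v} \<subseteq> Fs ! j"
      using newv[OF Fs, of p] less.prems(1) by auto
    have "x \<noteq> v" using v(2) \<open>q0 < p\<close> q0(2) by blast
    then have xj: "x \<in> Fs ! j" using v(4) less.prems(2) by blast
    have jl: "j < length Fs" using v(3) less.prems(1) by simp
    obtain W where W: "walk X d W" "hd W = Fs ! j" "last W = Fs ! q0" "\<forall>f\<in>set W. x \<in> f"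
      using less.IH[OF v(3) jl xj] by blast
    have pF: "Fs ! p \<in> F" using Fs_facet[OF Fs less.prems(1)] .
    have jF: "Fs ! j \<in> F" using Fs_facet[OF Fs jl] .
    have ne: "Fs ! p \<noteq> Fs ! j" using Fs_inj[OF Fs less.prems(1) jl] v(3) by auto
    have "Fs ! p \<inter> Fs ! j = Fs ! p - {v}"
      using two_facets_ridge[OF pF jF ne _ v(4)] card_minus_elem[OF pF v(1)] by blast
    then have "card (Fs ! p \<inter> Fs ! j) = d" using card_minus_elem[OF pF v(1)] by simp
    then have "walk X d (Fs ! p # W)" using walk_Cons_adj[OF W(1) pF] W(2) by simp
    moreover have "last (Fs ! p # W) = Fs ! q0" using W(3) walk_ne[OF W(1)] by simp
    ultimately show ?thesis using W(4) less.prems(2) by (intro exI[of _ "Fs ! p # W"]) simp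
  qed
qed

lemma SW:
  assumes a: "a \<in> F" "x \<in> a" and b: "b \<in> F" "x \<in> b"
  shows "\<exists>W. walk X d W \<and> hd W = a \<and> last W = b \<and> (\<forall>f\<in>set W. x \<in> f)"
proof -
  obtain Fs where Fs: "stk_ok Fs" using ex_Fs by blast
  obtain pa where pa: "pa < length Fs" "Fs ! pa = a" using Fs_ex[OF Fs a(1)] by blast
  obtain pb where pb: "pb < length Fs" "Fs ! pb = b" using Fs_ex[OF Fs b(1)] by blast
  define q0 where "q0 = (LEAST q. q < length Fs \<and> x \<in> Fs ! q)"
  have q0: "q0 < length Fs \<and> x \<in> Fs ! q0" unfolding q0_def using LeastI[of "\<lambda>q. q < length Fs \<and> x \<in> Fs ! q" pa] pa a(2) by blast
  have q0m: "\<forall>q<q0. x \<notin> Fs ! q"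
  proof (intro allI impI)
    fix q assume qq: "q < q0"
    then have "\<not> (q < length Fs \<and> x \<in> Fs ! q)" unfolding q0_def by (rule not_less_Least)
    moreover have "q < length Fs" using qq q0 by simp
    ultimately show "x \<notin> Fs ! q" by simp
  qed
  obtain Wa where Wa: "walk X d Wa" "hd Wa = a" "last Wa = Fs ! q0" "\<forall>f\<in>set Wa. x \<in> f"
    using star_to_root[OF Fs _ _ q0m, of pa] q0 pa a(2) by blast
  obtain Wb where Wb: "walk X d Wb" "hd Wb = b" "last Wb = Fs ! q0" "\<forall>f\<in>set Wb. x \<in> f"
    using star_to_root[OF Fs _ _ q0m, of pb] q0 pb b(2) by blast
  have "walk X d (rev Wb)" using Wb(1) walk_rev by simp
  moreover have "hd (rev Wb) = Fs ! q0" using Wb(3) walk_ne[OF Wb(1)] by (simp add: hd_rev)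
  ultimately obtain C where C: "walk X d C" "hd C = hd Wa" "last C = last (rev Wb)" "set C \<subseteq> set Wa \<union> set (rev Wb)"
    using walk_join[OF Wa(1)] Wa(3) by metis
  have "last (rev Wb) = b" using Wb(2) walk_ne[OF Wb(1)] by (simp add: last_rev)
  then show ?thesis using C Wa Wb by (intro exI[of _ C]) auto
qed

lemma conn_root:
  assumes Fs: "stk_ok Fs"
  shows "p < length Fs \<Longrightarrow> \<exists>W. walk X d W \<and> hd W = Fs ! p \<and> last W = Fs ! 0"
proof (induction p rule: less_induct)
  case (less p)
  show ?case
  proof (cases "p = 0")
    case True
    then show ?thesis using Fs_facet[OF Fs less.prems(1)] by (intro exI[of _ "[Fs ! p]"]) simp
  next
    case False
    then obtain v j where v: "v \<in> Fs ! p" "\<forall>q<p. v \<notin> Fs ! q" "j < p" "Fs ! p - {v} \<subseteq> Fs ! j"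
      using newv[OF Fs, of p] less.prems(1) by auto
    have jl: "j < length Fs" using v(3) less.prems(1) by simp
    obtain W where W: "walk X d W" "hd W = Fs ! j" "last W = Fs ! 0"
      using less.IH[OF v(3) jl] by blast
    have pF: "Fs ! p \<in> F" using Fs_facet[OF Fs less.prems(1)] .
    have jF: "Fs ! j \<in> F" using Fs_facet[OF Fs jl] .
    have ne: "Fs ! p \<noteq> Fs ! j" using Fs_inj[OF Fs less.prems(1) jl] v(3) by auto
    have "Fs ! p \<inter> Fs ! j = Fs ! p - {v}"
      using two_facets_ridge[OF pF jF ne _ v(4)] card_minus_elem[OF pF v(1)] by blast
    then have "card (Fs ! p \<inter> Fs ! j) = d" using card_minus_elem[OF pF v(1)] by simp
    then have "walk X d (Fs ! p # W)" using walk_Cons_adj[OF W(1) pF] W(2) by simp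
    moreover have "last (Fs ! p # W) = Fs ! 0" using W(3) walk_ne[OF W(1)] by simp
    ultimately show ?thesis by (intro exI[of _ "Fs ! p # W"]) simp
  qed
qed

lemma CONN:
  assumes "a \<in> F" "b \<in> F"
  shows "\<exists>W. walk X d W \<and> hd W = a \<and> last W = b"
proof -
  obtain Fs where Fs: "stk_ok Fs" using ex_Fs by blast
  obtain pa where pa: "pa < length Fs" "Fs ! pa = a" using Fs_ex[OF Fs assms(1)] by blast
  obtain pb where pb: "pb < length Fs" "Fs ! pb = b" using Fs_ex[OF Fs assms(2)] by blast
  obtain Wa where Wa: "walk X d Wa" "hd Wa = a" "last Wa = Fs ! 0" using conn_root[OF Fs pa(1)] pa by blast
  obtain Wb where Wb: "walk X d Wb" "hd Wb = b" "last Wb = Fs ! 0" using conn_root[OF Fs pb(1)] pb by blast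
  have "walk X d (rev Wb)" using Wb(1) walk_rev by simp
  moreover have "hd (rev Wb) = Fs ! 0" using Wb(3) walk_ne[OF Wb(1)] by (simp add: hd_rev)
  ultimately obtain C where C: "walk X d C" "hd C = hd Wa" "last C = last (rev Wb)"
    using walk_join[OF Wa(1)] Wa(3) by metis
  have "last (rev Wb) = b" using Wb(2) walk_ne[OF Wb(1)] by (simp add: last_rev)
  then show ?thesis using C Wa by blast
qed

lemma strip:
  assumes W: "walk X d W" "hd W = a" "last W \<noteq> a"
  shows "\<exists>W'. walk X d W' \<and> a \<notin> set W' \<and> card (a \<inter> hd W') = d \<and> last W' = last W \<and> set W' \<subseteq> set W"
proof -
  have "a \<in> set W" using W walk_ne hd_in_set by metis
  then obtain ys zs where s: "W = ys @ a # zs" "a \<notin> set zs" using split_list_last by metis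
  have zne: "zs \<noteq> []" using s W(3) by auto
  have w1: "walk X d (a # zs)" using walk_appendD2[of ys "a # zs"] W(1) s(1) by simp
  have "walk X d (a # hd zs # tl zs)" using w1 zne by simp
  then have c: "card (a \<inter> hd zs) = d" and w2: "walk X d (hd zs # tl zs)" unfolding walk_Cons2 by auto
  have "walk X d zs" using w2 zne by simp
  moreover have "last zs = last W" using s zne by simp
  moreover have "set zs \<subseteq> set W" using s by auto
  ultimately show ?thesis using s(2) c by blast
qed

end

context stk begin

lemma hd_notin_tl: "path X d P \<Longrightarrow> hd P \<notin> set (tl P)"
  using distinct_path by (metis distinct.simps(2) list.collapse list.sel(2) list.set(1) empty_iff)

lemma CONT2:
  assumes P: "path X d P" and len: "2 \<le> length P" and x: "x \<in> hd P" "x \<notin> P ! 1"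
    and k: "1 \<le> k" "k < length P"
  shows "x \<notin> P ! k"
proof
  assume xk: "x \<in> P ! k"
  have W: "walk X d P" using P path_walk by blast
  have Pne: "P \<noteq> []" using len by auto
  let ?g = "hd P"
  have g0: "P ! 0 = ?g" using Pne by (simp add: hd_conv_nth)
  let ?A = "take k (tl P)"
  have tlne: "tl P \<noteq> []" using len by (cases P) auto
  have wA: "walk X d ?A" using walk_take[OF walk_tl[OF W tlne]] k by simp
  have "?A \<noteq> []" using k tlne by simp
  then have "hd ?A = ?A ! 0" by (simp add: hd_conv_nth)
  also have "\<dots> = tl P ! 0" using k by simp
  also have "\<dots> = P ! 1" using Pne tlne by (cases P) auto
  finally have hA: "hd ?A = P ! 1" .
  have lA: "last ?A = P ! k"
  proof -
    have "?A \<noteq> []" using k tlne by simp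
    then have "last ?A = ?A ! (length ?A - 1)" by (simp add: last_conv_nth)
    also have "\<dots> = tl P ! (k - 1)" using k by simp
    also have "\<dots> = P ! k" using k Pne by (simp add: nth_tl)
    finally show ?thesis .
  qed
  have gA: "?g \<notin> set ?A" using hd_notin_tl[OF P] by (meson in_set_takeD)
  have gF: "?g \<in> F" using walk_hd[OF W] .
  have kF: "P ! k \<in> F" using walk_nth[OF W k(2)] .
  have gk: "?g \<noteq> P ! k"
  proof
    assume "?g = P ! k"
    moreover have "P ! k \<in> set (tl P)"
    proof -
      have "P ! k = tl P ! (k - 1)" using k Pne by (cases P) auto
      moreover have "k - 1 < length (tl P)" using k by simp
      ultimately show ?thesis by simp
    qed
    ultimately show False using hd_notin_tl[OF P] by simp
  qed
  obtain S where S: "walk X d S" "hd S = ?g" "last S = P ! k" "\<forall>f\<in>set S. x \<in> f"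
    using SW[OF gF x(1) kF xk] by blast
  obtain S' where S': "walk X d S'" "?g \<notin> set S'" "card (?g \<inter> hd S') = d" "last S' = P ! k" "set S' \<subseteq> set S"
    using strip[OF S(1) S(2)] S(3) gk by auto
  have wr: "walk X d (rev S')" using S'(1) walk_rev by simp
  have hr: "hd (rev S') = P ! k" using S'(4) walk_ne[OF S'(1)] by (simp add: hd_rev)
  obtain Y where Y: "walk X d Y" "hd Y = hd ?A" "last Y = last (rev S')" "set Y \<subseteq> set ?A \<union> set (rev S')"
    using walk_join[OF wA wr] lA hr by metis
  have lY: "last Y = hd S'" using Y(3) walk_ne[OF S'(1)] by (simp add: last_rev)
  have gY: "?g \<notin> set Y" using Y(4) gA S'(2) by auto
  have c1: "card (?g \<inter> P ! 1) = d" using walk_adj[OF W, of 0] len g0 by simp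
  have xS': "x \<in> hd S'" using S'(5) S(4) walk_ne[OF S'(1)] hd_in_set by blast
  have "?g \<inter> P ! 1 \<noteq> ?g \<inter> hd S'" using x xS' by blast
  then show False
    using CYC[OF gF _ _ c1 S'(3) _ Y(1) gY] Y(2) hA lY by blast
qed

lemma UP:
  "path X d P1 \<Longrightarrow> path X d P2 \<Longrightarrow> hd P1 = hd P2 \<Longrightarrow> last P1 = last P2 \<Longrightarrow> P1 = P2"
proof (induction P1 arbitrary: P2 rule: induct_list012)
  case 1 then show ?case using path_walk walk_ne by blast
next
  case (2 a)
  have P2ne: "P2 \<noteq> []" using "2.prems"(2) path_walk walk_ne by blast
  have hl: "hd P2 = last P2" using "2.prems"(3,4) by simp
  have "\<not> 2 \<le> length P2"
  proof
    assume "2 \<le> length P2"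
    then show False using NC1[OF "2.prems"(2) _ hl] by blast
  qed
  moreover have "length P2 \<noteq> 0" using P2ne by simp
  ultimately have "length P2 = 1" by linarith
  then obtain u where u: "P2 = [u]" by (metis One_nat_def length_0_conv length_Suc_conv)
  then show ?case using "2.prems"(3) by simp
next
  case (3 a b R)
  have ne: "a \<noteq> last (a # b # R)" using path_hd_ne_last[OF "3.prems"(1)] by simp
  have P2ne: "P2 \<noteq> []" using "3.prems"(2) path_walk walk_ne by blast
  obtain b' R' where P2: "P2 = a # b' # R'"
  proof (cases P2)
    case Nil then show ?thesis using P2ne by simp
  next
    case (Cons a2 T)
    then have "a2 = a" using "3.prems"(3) by simp
    moreover have "T \<noteq> []"
    proof
      assume "T = []"
      then have "last P2 = a" using Cons \<open>a2 = a\<close> by simp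
      then show False using "3.prems"(4) ne by simp
    qed
    ultimately show ?thesis using that Cons by (metis list.collapse)
  qed
  have p1: "path X d (b # R)" using "3.prems"(1) path_Cons2 by blast
  have p2: "path X d (b' # R')" using "3.prems"(2) P2 path_Cons2 by blast
  have l12: "last (b # R) = last (b' # R')" using "3.prems"(4) P2 by simp
  show ?case
  proof (cases "b = b'")
    case True
    then show ?thesis using "3.IH"(2)[OF p1 p2] True l12 P2 by simp
  next
    case False
    have aF: "a \<in> F" using "3.prems"(1) path_Cons2 by blast
    have bF: "b \<in> F" using p1 path_walk walk_hd by fastforce
    have b'F: "b' \<in> F" using p2 path_walk walk_hd by fastforce
    have c1: "card (a \<inter> b) = d" using "3.prems"(1) path_Cons2 by blast
    have c2: "card (a \<inter> b') = d" using "3.prems"(2) P2 path_Cons2 by blast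
    show ?thesis
    proof (cases "a \<inter> b = a \<inter> b'")
      case False2: False
      have w1: "walk X d (b # R)" using p1 path_walk by blast
      have w2: "walk X d (rev (b' # R'))" using p2 path_walk walk_rev by blast
      have "hd (rev (b' # R')) = last (b # R)" using l12 by (simp add: hd_rev)
      then obtain Y where Y: "walk X d Y" "hd Y = b" "last Y = last (rev (b' # R'))" "set Y \<subseteq> set (b # R) \<union> set (rev (b' # R'))"
        using walk_join[OF w1 w2] by (metis list.sel(1))
      have "a \<notin> set (b # R)" using hd_notin_tl[OF "3.prems"(1)] by simp
      moreover have "a \<notin> set (b' # R')" using hd_notin_tl[OF "3.prems"(2)] P2 by simp
      ultimately have aY: "a \<notin> set Y" using Y(4) by auto
      have lY: "last Y = b'" using Y(3) by simp
      show ?thesis using CYC[OF aF _ _ c1 c2 False2 Y(1) aY] Y(2) lY by blast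
    next
      case True
      have bb': "b \<inter> b' = a \<inter> b"
        using two_facets_ridge[OF bF b'F False, of "a \<inter> b"] True c1 by auto
      have "a \<inter> b' \<notin> set (ridges (b' # R'))" using "3.prems"(2) P2 path_Cons2 by blast
      then have "path X d (b # b' # R')" using path_Cons2[of b b' R'] bF bb' c1 p2 True by simp
      moreover have "hd (b # R) = hd (b # b' # R')" by simp
      moreover have "last (b # R) = last (b # b' # R')" using l12 by simp
      ultimately have "b # R = b # b' # R'" using "3.IH"(2)[OF p1] by blast
      then have "R = b' # R'" by simp
      then have "ridges (a # b # R) = (a \<inter> b) # (b \<inter> b') # ridges (b' # R')" by simp
      then have "\<not> distinct (ridges (a # b # R))" using bb' by simp
      then show ?thesis using "3.prems"(1) by (simp add: path_def)
    qed
  qed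
qed

lemma GATE:
  assumes fs: "path X d fs" "2 \<le> length fs" "x \<in> hd fs" "x \<notin> fs ! 1"
    and A: "path X d A" "x \<in> hd A" "last A = last fs"
  shows "\<exists>pre. A = pre @ fs"
proof -
  have Wf: "walk X d fs" using fs(1) path_walk by blast
  have WA: "walk X d A" using A(1) path_walk by blast
  have fsne: "fs \<noteq> []" using fs(2) by auto
  have Ane: "A \<noteq> []" using walk_ne[OF WA] .
  have notx: "\<And>k. 1 \<le> k \<Longrightarrow> k < length fs \<Longrightarrow> x \<notin> fs ! k" using CONT2[OF fs] by blast
  have xlast: "x \<notin> last fs" using notx[of "length fs - 1"] fs(2) fsne by (simp add: last_conv_nth)
  have hfF: "hd fs \<in> F" using walk_hd[OF Wf] .
  have hAF: "hd A \<in> F" using walk_hd[OF WA] .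
  have "hd fs \<in> set A"
  proof (rule ccontr)
    assume nin: "hd fs \<notin> set A"
    have "\<exists>i. Suc i < length A \<and> x \<in> A ! i \<and> x \<notin> A ! Suc i"
      using exit_index[of A "\<lambda>f. x \<in> f"] Ane A(2) A(3) xlast by (simp add: hd_conv_nth)
    then obtain i where i: "Suc i < length A" "x \<in> A ! i" "x \<notin> A ! Suc i" by blast
    let ?a = "A ! i" and ?b = "A ! Suc i"
    obtain S where S: "walk X d S" "hd S = hd A" "last S = hd fs" "\<forall>f\<in>set S. x \<in> f"
      using SW[OF hAF A(2) hfF fs(3)] by blast
    obtain C where C: "walk X d C" "hd C = hd S" "last C = last fs" "set C \<subseteq> set S \<union> set fs"
      using walk_join[OF S(1) Wf] S(3) by metis
    obtain B where B: "path X d B" "hd B = hd C" "last B = last C" "set B \<subseteq> set C" using RED[OF C(1)] by blast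
    have AB: "A = B" using UP[OF A(1) B(1)] B C S A(3) by simp
    have bA: "?b \<in> set A" using i(1) by simp
    then have "?b \<in> set S \<union> set fs" using AB B(4) C(4) by blast
    then have "?b \<in> set fs" using S(4) i(3) by blast
    then obtain k where k: "k < length fs" "fs ! k = ?b" by (metis in_set_conv_nth)
    have k1: "1 \<le> k"
    proof (rule ccontr)
      assume "\<not> 1 \<le> k"
      then have "k = 0" by simp
      then have "?b = hd fs" using k fsne by (simp add: hd_conv_nth)
      then show False using nin bA by simp
    qed
    have aF: "?a \<in> F" using walk_nth[OF WA] i(1) by simp
    have ane: "?a \<noteq> hd fs" using nin i(1) by (metis Suc_lessD nth_mem)
    obtain S2 where S2: "walk X d S2" "hd S2 = ?a" "last S2 = hd fs" "\<forall>f\<in>set S2. x \<in> f"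
      using SW[OF aF i(2) hfF fs(3)] by blast
    obtain S' where S': "walk X d S'" "?a \<notin> set S'" "card (?a \<inter> hd S') = d" "last S' = hd fs" "set S' \<subseteq> set S2"
      using strip[OF S2(1) S2(2)] S2(3) ane by auto
    let ?T = "take (Suc k) fs"
    have wT: "walk X d ?T" using walk_take[OF Wf] by simp
    have hT: "hd ?T = hd fs" using fsne by simp
    have lT: "last ?T = ?b" using k by (simp add: take_Suc_conv_app_nth)
    obtain Y where Y: "walk X d Y" "hd Y = hd S'" "last Y = last ?T" "set Y \<subseteq> set S' \<union> set ?T"
      using walk_join[OF S'(1) wT] S'(4) hT by metis
    have aT: "?a \<notin> set ?T"
    proof
      assume "?a \<in> set ?T"
      then obtain j where j: "j < length ?T" "?T ! j = ?a" by (metis in_set_conv_nth)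
      show False
      proof (cases "j = 0")
        case True
        then have "?a = hd fs" using j fsne by (simp add: hd_conv_nth)
        then show False using ane by simp
      next
        case False
        then have "x \<notin> fs ! j" using notx[of j] j(1) by simp
        then show False using j i(2) by simp
      qed
    qed
    have aY: "?a \<notin> set Y" using Y(4) S'(2) aT by blast
    have cab: "card (?a \<inter> ?b) = d" using walk_adj[OF WA i(1)] .
    have xS': "x \<in> hd S'" using S'(5) S2(4) walk_ne[OF S'(1)] hd_in_set by blast
    have "?a \<inter> hd S' \<noteq> ?a \<inter> ?b" using xS' i by blast
    then show False using CYC[OF aF _ _ S'(3) cab _ Y(1) aY] Y(2) Y(3) lT by blast
  qed
  then obtain pre suf where s: "A = pre @ hd fs # suf" by (metis split_list)
  have p2: "path X d (hd fs # suf)" using path_appendD2[of pre "hd fs # suf"] A(1) s by simp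
  have "last (hd fs # suf) = last fs" using s A(3) by simp
  then have "hd fs # suf = fs" using UP[OF p2 fs(1)] by simp
  then show ?thesis using s by metis
qed

end

locale stkc = stk +
  fixes c :: "'a set"
  assumes cX: "c \<in> X" and cc: "card c = d"
begin

abbreviation "XX n \<equiv> Xm X d c n"
abbreviation "VV n \<equiv> Vm X d c n"

lemma XX_iff: "f \<in> XX n \<longleftrightarrow> f \<in> F \<and> (\<exists>fs. walk X d fs \<and> length fs \<le> n \<and> hd fs = f \<and> c \<subseteq> last fs)"
  unfolding Xm_def by simp

lemma XX0: "XX 0 = {}" unfolding Xm_def using walk_ne by fastforce

lemma XX_mono: "n \<le> n' \<Longrightarrow> XX n \<subseteq> XX n'"
  unfolding Xm_def by force

lemma XX_sub: "XX n \<subseteq> F" unfolding Xm_def by blast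

lemma XX_suffix:
  assumes "walk X d W" "c \<subseteq> last W" "k < length W"
  shows "W ! k \<in> XX (length W - k)"
proof -
  have "walk X d (drop k W)" using walk_drop assms by blast
  moreover have "hd (drop k W) = W ! k" using assms(3) by (simp add: hd_drop_conv_nth)
  moreover have "last (drop k W) = last W" using assms(3) by simp
  moreover have "W ! k \<in> F" using walk_nth assms by blast
  ultimately show ?thesis unfolding XX_iff using assms(2) by (intro conjI exI[of _ "drop k W"]) auto
qed

lemma XX_walk:
  assumes "a \<in> XX (Suc n)"
  shows "\<exists>Wa. walk X d Wa \<and> hd Wa = a \<and> c \<subseteq> last Wa \<and> set (tl Wa) \<subseteq> XX n"
proof -
  obtain W where W: "walk X d W" "length W \<le> Suc n" "hd W = a" "c \<subseteq> last W" using assms unfolding XX_iff by blast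
  have "set (tl W) \<subseteq> XX n"
  proof
    fix f assume "f \<in> set (tl W)"
    then obtain k where k: "k < length (tl W)" "tl W ! k = f" by (metis in_set_conv_nth)
    then have "W ! Suc k = f" using walk_ne[OF W(1)] by (cases W) auto
    moreover have "Suc k < length W" using k by simp
    ultimately have "f \<in> XX (length W - Suc k)" using XX_suffix[OF W(1) W(4)] by blast
    moreover have "length W - Suc k \<le> n" using W(2) by simp
    ultimately show "f \<in> XX n" using XX_mono by blast
  qed
  then show ?thesis using W by blast
qed

lemma c_facet: "\<exists>e\<in>F. c \<subseteq> e" using face_in_facet[OF cX] .

lemma XX_all: "\<exists>N. F \<subseteq> XX N"
proof -
  obtain e where e: "e \<in> F" "c \<subseteq> e" using c_facet by blast
  have "\<forall>f\<in>F. \<exists>n. f \<in> XX n"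
  proof
    fix f assume f: "f \<in> F"
    obtain W where W: "walk X d W" "hd W = f" "last W = e" using CONN[OF f e(1)] by blast
    then have "f \<in> XX (length W)" unfolding XX_iff using f e(2) by blast
    then show "\<exists>n. f \<in> XX n" by blast
  qed
  then obtain g where g: "\<forall>f\<in>F. f \<in> XX (g f)" by metis
  have finF: "finite F" using finX by (simp add: facets_def)
  define N where "N = Max (g ` F)"
  have "\<forall>f\<in>F. f \<in> XX N"
  proof
    fix f assume f: "f \<in> F"
    then have "g f \<le> N" unfolding N_def using finF by simp
    then show "f \<in> XX N" using g f XX_mono by blast
  qed
  then show ?thesis by blast
qed

lemma VV_eq: "1 \<le> n \<Longrightarrow> VV n = \<Union>(XX n)" unfolding Vm_def by simp

lemma VV_mono: assumes "1 \<le> n" "n \<le> n'" shows "VV n \<subseteq> VV n'"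
proof -
  have "VV n = \<Union>(XX n)" using VV_eq assms(1) by blast
  moreover have "VV n' = \<Union>(XX n')" using VV_eq assms by simp
  moreover have "XX n \<subseteq> XX n'" using XX_mono assms(2) by blast
  ultimately show ?thesis by blast
qed

lemma XX_sub_V: "1 \<le> n \<Longrightarrow> f \<in> XX n \<Longrightarrow> f \<subseteq> VV n"
  using VV_eq by blast

lemma VV_all: "\<exists>N\<ge>1. vertices X \<subseteq> VV N"
proof -
  obtain N where N: "F \<subseteq> XX N" using XX_all by blast
  have "F \<subseteq> XX (Suc N)" using N XX_mono[of N "Suc N"] by auto
  moreover have "vertices X \<subseteq> \<Union>F" using vertex_in_facet by blast
  ultimately have "vertices X \<subseteq> \<Union>(XX (Suc N))" by blast
  then have "vertices X \<subseteq> VV (Suc N)" using VV_eq[of "Suc N"] by simp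
  then show ?thesis by (intro exI[of _ "Suc N"]) simp
qed

lemma level_facet:
  assumes n: "1 \<le> n" and h: "h \<in> XX (Suc n)" "h \<notin> XX n"
  shows "\<exists>T. walk X d T \<and> c \<subseteq> last T \<and> set T \<subseteq> XX n \<and> card (h \<inter> hd T) = d"
proof -
  obtain Wa where Wa: "walk X d Wa" "hd Wa = h" "c \<subseteq> last Wa" "set (tl Wa) \<subseteq> XX n"
    using XX_walk[OF h(1)] by blast
  have hF: "h \<in> F" using h(1) XX_sub by blast
  have "tl Wa \<noteq> []"
  proof
    assume "tl Wa = []"
    then have "Wa = [h]" using Wa(2) walk_ne[OF Wa(1)] by (metis list.collapse)
    then have "h \<in> XX 1" unfolding XX_iff using hF Wa(1) Wa(3) by (intro conjI exI[of _ "[h]"]) auto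
    then show False using h(2) XX_mono[OF n] by blast
  qed
  have Wa2: "Wa = h # hd (tl Wa) # tl (tl Wa)" using \<open>tl Wa \<noteq> []\<close> Wa(2) walk_ne[OF Wa(1)] by (metis list.collapse)
  have "card (h \<inter> hd (tl Wa)) = d" using Wa(1) Wa2 walk_Cons2 by metis
  moreover have "walk X d (tl Wa)" using walk_tl[OF Wa(1) \<open>tl Wa \<noteq> []\<close>] .
  moreover have "c \<subseteq> last (tl Wa)" using Wa(3) \<open>tl Wa \<noteq> []\<close> by (simp add: last_tl)
  ultimately show ?thesis using Wa(4) by blast
qed

lemma KF:
  assumes n: "1 \<le> n" and h: "h \<in> XX (Suc n)" "h \<notin> XX n"
    and T: "walk X d T" "c \<subseteq> last T" "set T \<subseteq> XX n" "card (h \<inter> hd T) = d"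
    and W: "walk X d W" "h \<notin> set W" "hd W \<in> XX (Suc n)" "card (last W \<inter> h) = d"
  shows "last W \<inter> h = h \<inter> hd T"
proof (rule ccontr)
  assume ne: "last W \<inter> h \<noteq> h \<inter> hd T"
  have hF: "h \<in> F" using h(1) XX_sub by blast
  obtain Wa where Wa: "walk X d Wa" "hd Wa = hd W" "c \<subseteq> last Wa" "set (tl Wa) \<subseteq> XX n"
    using XX_walk[OF W(3)] by blast
  have wr: "walk X d (rev W)" using W(1) walk_rev by simp
  have "last (rev W) = hd Wa" using Wa(2) walk_ne[OF W(1)] by (simp add: last_rev)
  then obtain Y1 where Y1: "walk X d Y1" "hd Y1 = hd (rev W)" "last Y1 = last Wa" "set Y1 \<subseteq> set (rev W) \<union> set Wa"
    using walk_join[OF wr Wa(1)] by blast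
  have wT: "walk X d (rev T)" using T(1) walk_rev by simp
  have "c \<subseteq> hd (rev T)" using T(2) walk_ne[OF T(1)] by (simp add: hd_rev)
  then obtain Y where Y: "walk X d Y" "hd Y = hd Y1" "last Y = last (rev T)" "set Y \<subseteq> set Y1 \<union> set (rev T)"
    using walk_join_ridge[OF Y1(1) wT, of c] Y1(3) Wa(3) cc by blast
  have hY: "h \<notin> set Y"
  proof
    assume hy: "h \<in> set Y"
    have "Wa = hd W # tl Wa" using Wa(2) walk_ne[OF Wa(1)] by (metis list.collapse)
    then have "set Wa = insert (hd W) (set (tl Wa))" by (metis list.set(2))
    then have "set Wa \<subseteq> insert (hd W) (XX n)" using Wa(4) by blast
    moreover have "hd W \<in> set W" using walk_ne[OF W(1)] by simp
    ultimately show False using hy Y(4) Y1(4) T(3) W(2) h(2) by auto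
  qed
  have hdY: "hd Y = last W" using Y(2) Y1(2) walk_ne[OF W(1)] by (simp add: hd_rev)
  have lY: "last Y = hd T" using Y(3) walk_ne[OF T(1)] by (simp add: last_rev)
  have c1: "card (last W \<inter> h) = d" using W(4) .
  show False using CYC[OF hF _ _ c1 T(4) ne Y(1) hY] hdY lY by blast
qed

end

lemma interior_set:
  assumes "\<forall>i. 0 < i \<and> i < length fs - 1 \<longrightarrow> P (fs ! i)" "f \<in> set fs" "f \<noteq> hd fs" "f \<noteq> last fs"
  shows "P f"
proof -
  obtain i where i: "i < length fs" "fs ! i = f" using assms(2) by (metis in_set_conv_nth)
  have ne: "fs \<noteq> []" using assms(2) by auto
  have "i \<noteq> 0" using i assms(3) ne by (metis hd_conv_nth)
  moreover have "i \<noteq> length fs - 1" using i assms(4) ne by (metis last_conv_nth)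
  ultimately show ?thesis using assms(1) i by auto
qed

lemma interior_nth:
  assumes "\<forall>f\<in>set K. f \<noteq> hd K \<longrightarrow> f \<noteq> last K \<longrightarrow> P f" "distinct K" "0 < i" "i < length K - 1"
  shows "P (K ! i)"
proof -
  have ne: "K \<noteq> []" using assms(4) by auto
  have il: "i < length K" using assms(4) by simp
  have "K ! i \<noteq> K ! 0" using nth_eq_iff_index_eq[OF assms(2) il, of 0] assms(3) ne by simp
  then have "K ! i \<noteq> hd K" using ne by (simp add: hd_conv_nth)
  moreover have "K ! i \<noteq> K ! (length K - 1)" using nth_eq_iff_index_eq[OF assms(2) il, of "length K - 1"] assms(4) ne by simp
  then have "K ! i \<noteq> last K" using ne by (simp add: last_conv_nth)
  moreover have "K ! i \<in> set K" using assms(4) by simp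
  ultimately show ?thesis using assms(1) by blast
qed

lemma last_notin_butlast: assumes "distinct xs" shows "last xs \<notin> set (butlast xs)"
proof (cases "xs = []")
  case False
  then have "xs = butlast xs @ [last xs]" by simp
  then have "distinct (butlast xs @ [last xs])" using assms by metis
  then show ?thesis by simp
qed simp

lemma suffix_dich:
  assumes "pre1 @ fs = pre2 @ bs" "fs \<noteq> []" "bs \<noteq> []"
  shows "hd fs \<in> set bs \<or> hd bs \<in> set fs"
proof -
  obtain us where "pre1 = pre2 @ us \<and> us @ fs = bs \<or> pre1 @ us = pre2 \<and> fs = us @ bs"
    using assms(1) append_eq_append_conv2 by blast
  then show ?thesis using assms(2,3) by (metis Un_iff hd_in_set set_append)
qed

lemma hd_rev_nth: "2 \<le> length gs \<Longrightarrow> rev gs ! (length gs - 2) = gs ! 1"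
  by (simp add: rev_nth numeral_2_eq_2 Suc_diff_Suc)
lemma rev_nth1: "2 \<le> length gs \<Longrightarrow> rev gs ! 1 = gs ! (length gs - 2)"
  by (simp add: rev_nth numeral_2_eq_2)

context stkc begin

lemma GZ:
  assumes n: "1 \<le> n" and h: "h \<in> XX (Suc n)" "h \<notin> XX n" "z \<in> h" and zV: "z \<notin> VV n"
    and T: "walk X d T" "c \<subseteq> last T" "set T \<subseteq> XX n" "card (h \<inter> hd T) = d"
    and x: "x \<in> VV (Suc n)" "\<not> in_common_facet X x z"
    and fs: "path X d fs" "2 \<le> length fs" "x \<in> hd fs" "z \<in> last fs" "z \<notin> fs ! (length fs - 2)"
  shows "last fs = h \<and> fs ! (length fs - 2) \<inter> h = h \<inter> hd T"
proof -
  let ?L = "length fs"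
  let ?g = "fs ! (?L - 2)"
  have Wf: "walk X d fs" using fs(1) path_walk by blast
  have fsne: "fs \<noteq> []" using fs(2) by auto
  have hF: "h \<in> F" using h(1) XX_sub by blast
  have zXn: "\<And>f. f \<in> XX n \<Longrightarrow> z \<notin> f" using XX_sub_V[OF n] zV by blast
  have zT: "z \<notin> hd T" using zXn T(3) walk_ne[OF T(1)] hd_in_set by blast
  have comm: "\<And>f. f \<in> F \<Longrightarrow> x \<in> f \<Longrightarrow> z \<notin> f" using x(2) unfolding in_common_facet_def by blast
  have rp: "path X d (rev fs)" using fs(1) path_rev by simp
  have zfree: "\<And>f. f \<in> set (butlast fs) \<Longrightarrow> z \<notin> f"
  proof -
    fix f assume "f \<in> set (butlast fs)"
    then obtain i where i: "i < ?L - 1" "fs ! i = f" by (metis in_set_conv_nth length_butlast nth_butlast)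
    have r1: "z \<notin> rev fs ! 1" using rev_nth1[OF fs(2)] fs(5) by simp
    have r0: "z \<in> hd (rev fs)" using fs(4) fsne by (simp add: hd_rev)
    have r2: "2 \<le> length (rev fs)" using fs(2) by simp
    have "z \<notin> rev fs ! (?L - 1 - i)"
      using CONT2[OF rp r2 r0 r1, of "?L - 1 - i"] i by simp
    moreover have "rev fs ! (?L - 1 - i) = fs ! i" using i by (simp add: rev_nth)
    ultimately show "z \<notin> f" using i by simp
  qed
  have g'F: "?g \<in> F" using walk_nth[OF Wf] fs(2) by simp
  have bne: "butlast fs \<noteq> []" using fs(2) by (cases fs) auto
  have wb: "walk X d (butlast fs)" using walk_butlast[OF Wf bne] .
  have lb: "last (butlast fs) = ?g" using fs(2) bne by (simp add: last_conv_nth nth_butlast numeral_2_eq_2)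
  have hb: "hd (butlast fs) = hd fs" using fs(2) by (cases fs) auto
  have wY1: "walk X d (rev (butlast fs))" using wb walk_rev by simp
  have hY1: "hd (rev (butlast fs)) = ?g" using lb bne by (simp add: hd_rev)
  have lY1: "last (rev (butlast fs)) = hd fs" using hb bne by (simp add: last_rev)
  obtain g where g: "g \<in> XX (Suc n)" "x \<in> g" using x(1) VV_eq[of "Suc n"] by auto
  have gF: "g \<in> F" using g(1) XX_sub by blast
  have hfF: "hd fs \<in> F" using walk_hd[OF Wf] .
  obtain S where S: "walk X d S" "hd S = hd fs" "last S = g" "\<forall>f\<in>set S. x \<in> f"
    using SW[OF hfF fs(3) gF g(2)] by blast
  obtain Wg where Wg: "walk X d Wg" "hd Wg = g" "c \<subseteq> last Wg" "set (tl Wg) \<subseteq> XX n"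
    using XX_walk[OF g(1)] by blast
  obtain Y2 where Y2: "walk X d Y2" "hd Y2 = ?g" "last Y2 = g" "set Y2 \<subseteq> set (rev (butlast fs)) \<union> set S"
    using walk_join[OF wY1 S(1)] hY1 lY1 S(2) S(3) by metis
  obtain Y3 where Y3: "walk X d Y3" "hd Y3 = ?g" "last Y3 = last Wg" "set Y3 \<subseteq> set Y2 \<union> set Wg"
    using walk_join[OF Y2(1) Wg(1)] Y2(2,3) Wg(2) by metis
  have wrT: "walk X d (rev T)" using T(1) walk_rev by simp
  have crT: "c \<subseteq> hd (rev T)" using T(2) walk_ne[OF T(1)] by (simp add: hd_rev)
  obtain Y4 where Y4: "walk X d Y4" "hd Y4 = ?g" "last Y4 = last (rev T)" "set Y4 \<subseteq> set Y3 \<union> set (rev T)"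
    using walk_join_ridge[OF Y3(1) wrT, of c] Y3(2,3) Wg(3) crT cc by metis
  have lY4: "last Y4 = hd T" using Y4(3) walk_ne[OF T(1)] by (simp add: last_rev)
  have zY4: "\<forall>f\<in>set Y4. z \<notin> f"
  proof
    fix f assume f: "f \<in> set Y4"
    have sWg: "set Wg \<subseteq> insert g (XX n)"
    proof -
      have "Wg = g # tl Wg" using Wg(2) walk_ne[OF Wg(1)] by (metis list.collapse)
      then have "set Wg = insert g (set (tl Wg))" by (metis list.set(2))
      then show ?thesis using Wg(4) by blast
    qed
    have "f \<in> set (butlast fs) \<or> f \<in> set S \<or> f \<in> insert g (XX n) \<or> f \<in> set T"
      using f Y4(4) Y3(4) Y2(4) sWg by auto
    moreover have "\<And>f. f \<in> set S \<Longrightarrow> z \<notin> f" using S(4) comm walk_set[OF S(1)] by blast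
    moreover have "z \<notin> g" using comm gF g(2) by blast
    ultimately show "z \<notin> f" using zfree zXn T(3) by blast
  qed
  have wY5: "walk X d (Y4 @ [h])" using walk_append[OF Y4(1), of "[h]"] hF lY4 T(4) by (simp add: Int_commute)
  have lastfs: "last fs = h"
  proof (rule ccontr)
    assume kh: "last fs \<noteq> h"
    let ?k = "last fs"
    have kF: "?k \<in> F" using walk_last[OF Wf] .
    obtain S2 where S2: "walk X d S2" "hd S2 = ?k" "last S2 = h" "\<forall>f\<in>set S2. z \<in> f"
      using SW[OF kF fs(4) hF h(3)] by blast
    obtain S' where S': "walk X d S'" "?k \<notin> set S'" "card (?k \<inter> hd S') = d" "last S' = h" "set S' \<subseteq> set S2"
      using strip[OF S2(1) S2(2)] S2(3) kh by auto
    have wrS: "walk X d (rev S')" using S'(1) walk_rev by simp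
    have hrS: "hd (rev S') = h" using S'(4) walk_ne[OF S'(1)] by (simp add: hd_rev)
    obtain Z where Z: "walk X d Z" "hd Z = hd (Y4 @ [h])" "last Z = last (rev S')" "set Z \<subseteq> set (Y4 @ [h]) \<union> set (rev S')"
      using walk_join[OF wY5 wrS] hrS by (metis last_snoc)
    have hZ: "hd Z = ?g" using Z(2) Y4(2) walk_ne[OF Y4(1)] by simp
    have lZ: "last Z = hd S'" using Z(3) walk_ne[OF S'(1)] by (simp add: last_rev)
    have kZ: "?k \<notin> set Z"
    proof
      assume "?k \<in> set Z"
      then have "?k \<in> set Y4 \<or> ?k = h \<or> ?k \<in> set S'" using Z(4) by auto
      then show False using zY4 fs(4) kh S'(2) by blast
    qed
    have c1: "card (?k \<inter> ?g) = d"
    proof -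
      have "card (fs ! (?L - 2) \<inter> fs ! Suc (?L - 2)) = d" using walk_adj[OF Wf, of "?L - 2"] fs(2) by simp
      moreover have "fs ! Suc (?L - 2) = ?k" using fs(2) fsne by (simp add: last_conv_nth Suc_diff_Suc numeral_2_eq_2)
      ultimately show ?thesis by (simp add: Int_commute)
    qed
    have zS': "z \<in> hd S'" using S'(5) S2(4) walk_ne[OF S'(1)] hd_in_set by blast
    have "?k \<inter> ?g \<noteq> ?k \<inter> hd S'" using zS' fs(4,5) by blast
    then show False using CYC[OF kF _ _ c1 S'(3) _ Z(1) kZ] hZ lZ by blast
  qed
  have c2: "card (?g \<inter> h) = d"
  proof -
    have "card (fs ! (?L - 2) \<inter> fs ! Suc (?L - 2)) = d" using walk_adj[OF Wf, of "?L - 2"] fs(2) by simp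
    moreover have "fs ! Suc (?L - 2) = last fs" using fs(2) fsne by (simp add: last_conv_nth Suc_diff_Suc numeral_2_eq_2)
    ultimately show ?thesis using lastfs by simp
  qed
  have e1: "h \<inter> ?g = h - {z}" using ridge_eq_minus[OF hF g'F _ h(3) fs(5)] c2 by (simp add: Int_commute)
  have hTF: "hd T \<in> F" using walk_hd[OF T(1)] .
  have e2: "h \<inter> hd T = h - {z}" using ridge_eq_minus[OF hF hTF T(4) h(3) zT] .
  show ?thesis using lastfs e1 e2 by (simp add: Int_commute)
qed

end

lemma partition_same:
  assumes "partition_on A PP" "P \<in> PP" "Q \<in> PP" "a \<in> P" "a \<in> Q"
  shows "P = Q"
  using assms unfolding partition_on_def disjoint_def pairwise_def disjnt_def by blast

lemma len2_of_ne:
  assumes "xs \<noteq> []" "hd xs \<noteq> last xs" shows "2 \<le> length xs"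
proof (rule ccontr)
  assume "\<not> 2 \<le> length xs"
  moreover have "length xs \<noteq> 0" using assms(1) by simp
  ultimately have "length xs = 1" by linarith
  then have "xs = [hd xs]" by (metis One_nat_def length_0_conv length_Suc_conv list.sel(1))
  then show False using assms(2) by (metis last_ConsL)
qed

context stkc begin

lemma last_nth_L2: assumes "2 \<le> length fs" shows "fs ! Suc (length fs - 2) = last fs"
proof -
  have "fs \<noteq> []" using assms by auto
  moreover have "Suc (length fs - 2) = length fs - 1" using assms by simp
  ultimately show ?thesis by (simp add: last_conv_nth)
qed

lemma butlast_facts:
  assumes "path X d fs" "2 \<le> length fs"
  shows "walk X d (butlast fs)" "hd (butlast fs) = hd fs" "last (butlast fs) = fs ! (length fs - 2)"
    "last fs \<notin> set (butlast fs)"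
proof -
  have bne: "butlast fs \<noteq> []" using assms(2) by (cases fs) auto
  show "walk X d (butlast fs)" using walk_butlast[OF path_walk[OF assms(1)] bne] .
  show "hd (butlast fs) = hd fs" using assms(2) by (cases fs) auto
  show "last (butlast fs) = fs ! (length fs - 2)" using assms(2) bne by (simp add: last_conv_nth nth_butlast numeral_2_eq_2)
  show "last fs \<notin> set (butlast fs)" using last_notin_butlast distinct_path[OF assms(1)] by blast
qed

lemma adj_L2: assumes "path X d fs" "2 \<le> length fs" shows "card (fs ! (length fs - 2) \<inter> last fs) = d"
  using walk_adj[OF path_walk[OF assms(1)], of "length fs - 2"] assms(2) last_nth_L2[OF assms(2)] by simp

lemma adj_01: assumes "path X d fs" "2 \<le> length fs" shows "card (hd fs \<inter> fs ! 1) = d"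
proof -
  have "fs \<noteq> []" using assms(2) by auto
  then show ?thesis using walk_adj[OF path_walk[OF assms(1)], of 0] assms(2) by (simp add: hd_conv_nth)
qed

lemma leafF:
  assumes n: "1 \<le> n" and h: "h \<in> XX (Suc n)" "h \<notin> XX n"
    and T: "walk X d T" "c \<subseteq> last T" "set T \<subseteq> XX n" "card (h \<inter> hd T) = d"
    and PV: "partition_on (vertices X) PV" "\<forall>P\<in>PV. independent X P"
    and x: "x \<in> XX (Suc n)" "x \<noteq> h" and y: "y \<in> XX (Suc n)" "y \<noteq> h"
    and xh: "simF' X d PV x h" and hy: "simF' X d PV h y"
  shows "x = y \<or> simF' X d PV x y"
proof (cases "x = y")
  case True then show ?thesis by simp
next
  case False
  note xy = False
  let ?r = "h \<inter> hd T"
  have hF: "h \<in> F" using h(1) XX_sub by blast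
  have xF: "x \<in> F" using x(1) XX_sub by blast
  have yF: "y \<in> F" using y(1) XX_sub by blast
  obtain fs v w P where fs: "path X d fs" "hd fs = x" "last fs = h" "fs ! 0 - fs ! 1 = {v}"
    "last fs - fs ! (length fs - 2) = {w}" "P \<in> PV" "v \<in> P" "w \<in> P"
    "\<forall>i. 0 < i \<and> i < length fs - 1 \<longrightarrow> fs ! i \<inter> P = {}"
    using xh unfolding simF'_def by blast
  obtain gs v2 w2 P2 where gs: "path X d gs" "hd gs = h" "last gs = y" "gs ! 0 - gs ! 1 = {v2}"
    "last gs - gs ! (length gs - 2) = {w2}" "P2 \<in> PV" "v2 \<in> P2" "w2 \<in> P2"
    "\<forall>i. 0 < i \<and> i < length gs - 1 \<longrightarrow> gs ! i \<inter> P2 = {}"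
    using hy unfolding simF'_def by blast
  have fsne: "fs \<noteq> []" using fs(1) path_walk walk_ne by blast
  have gsne: "gs \<noteq> []" using gs(1) path_walk walk_ne by blast
  have L: "2 \<le> length fs" using len2_of_ne[OF fsne] fs(2,3) x(2) by simp
  have M: "2 \<le> length gs" using len2_of_ne[OF gsne] gs(2,3) y(2) by simp
  have Wf: "walk X d fs" using fs(1) path_walk by blast
  have Wg: "walk X d gs" using gs(1) path_walk by blast
  note bf = butlast_facts[OF fs(1) L]
  have r1: "fs ! (length fs - 2) \<inter> h = ?r"
    using KF[OF n h T bf(1)] bf fs(2,3) x(1) adj_L2[OF fs(1) L] by simp
  have tlne: "tl gs \<noteq> []" using M by (cases gs) auto
  have wtl: "walk X d (rev (tl gs))" using walk_tl[OF Wg tlne] walk_rev by simp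
  have htl: "h \<notin> set (rev (tl gs))" using hd_notin_tl[OF gs(1)] gs(2) by simp
  have hdrtl: "hd (rev (tl gs)) = y" using tlne gs(3) by (simp add: hd_rev last_tl)
  have g1: "hd (tl gs) = gs ! 1" using tlne gsne by (cases gs) (auto simp: hd_conv_nth)
  have lrtl: "last (rev (tl gs)) = gs ! 1" using tlne g1 by (simp add: last_rev)
  have g0: "gs ! 0 = h" using gs(2) gsne by (simp add: hd_conv_nth)
  have cg1: "card (gs ! 1 \<inter> h) = d" using adj_01[OF gs(1) M] gs(2) by (simp add: Int_commute)
  have r2: "gs ! 1 \<inter> h = ?r" using KF[OF n h T wtl htl] hdrtl lrtl y(1) cg1 by simp
  have "h - fs ! (length fs - 2) = h - ?r" using r1 by blast
  moreover have "h - gs ! 1 = h - ?r" using r2 by blast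
  ultimately have "{w} = {v2}" using fs(3,5) gs(4) g0 by simp
  then have wv2: "w = v2" by simp
  have PP: "P2 = P" using partition_same[OF PV(1) gs(6) fs(6) gs(7)] fs(8) wv2 by simp
  have f0: "fs ! 0 = x" using fs(2) fsne by (simp add: hd_conv_nth)
  have vx: "v \<in> x" using fs(4) f0 by blast
  have v1: "v \<notin> fs ! 1" using fs(4) by blast
  have w2y: "w2 \<in> y" using gs(5) gs(3) by blast
  have Ifs: "\<And>f. f \<in> set fs \<Longrightarrow> f \<noteq> x \<Longrightarrow> f \<noteq> h \<Longrightarrow> f \<inter> P = {}"
    using interior_set[of fs "\<lambda>f. f \<inter> P = {}"] fs(9) fs(2,3) by blast
  have Igs: "\<And>f. f \<in> set gs \<Longrightarrow> f \<noteq> h \<Longrightarrow> f \<noteq> y \<Longrightarrow> f \<inter> P = {}"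
    using interior_set[of gs "\<lambda>f. f \<inter> P = {}"] gs(9) gs(2,3) PP by blast
  have CL: "card (x \<inter> y) = d \<Longrightarrow> v \<in> y \<Longrightarrow> False"
  proof -
    assume cxy: "card (x \<inter> y) = d" and vy: "v \<in> y"
    have tfne: "tl fs \<noteq> []" using L by (cases fs) auto
    have wtf: "walk X d (tl fs)" using walk_tl[OF Wf tfne] .
    have "last (tl fs) = hd gs" using tfne fs(3) gs(2) by (simp add: last_tl)
    then obtain Y where Y: "walk X d Y" "hd Y = hd (tl fs)" "last Y = last gs" "set Y \<subseteq> set (tl fs) \<union> set gs"
      using walk_join[OF wtf Wg] by blast
    have "hd (tl fs) = fs ! 1" using tfne fsne by (cases fs) (auto simp: hd_conv_nth)
    then have hY: "hd Y = fs ! 1" using Y(2) by simp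
    have xY: "x \<notin> set Y"
    proof
      assume "x \<in> set Y"
      then have "x \<in> set (tl fs) \<or> x \<in> set gs" using Y(4) by blast
      moreover have "x \<notin> set (tl fs)" using hd_notin_tl[OF fs(1)] fs(2) by simp
      moreover have "x \<notin> set gs"
      proof
        assume xg: "x \<in> set gs"
        have "x \<inter> P \<noteq> {}" using vx fs(7) by blast
        then show False using Igs[OF xg] x(2) xy by blast
      qed
      ultimately show False by blast
    qed
    have c1: "card (x \<inter> fs ! 1) = d" using adj_01[OF fs(1) L] fs(2) by simp
    have "x \<inter> fs ! 1 \<noteq> x \<inter> y" using v1 vx vy by blast
    then show False using CYC[OF xF _ _ c1 cxy _ Y(1) xY] hY Y(3) gs(3) by blast
  qed
  have tlg: "walk X d (tl gs)" using walk_tl[OF Wg tlne] .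
  have rA: "?r \<subseteq> last (butlast fs)" using bf(3) r1 by blast
  have rB: "?r \<subseteq> hd (tl gs)" using g1 r2 by blast
  obtain C where C: "walk X d C" "hd C = hd (butlast fs)" "last C = last (tl gs)" "set C \<subseteq> set (butlast fs) \<union> set (tl gs)"
    using walk_join_ridge[OF bf(1) tlg rA rB] T(4) by blast
  obtain K where K: "path X d K" "hd K = hd C" "last K = last C" "set K \<subseteq> set C" using RED[OF C(1)] by blast
  have hK: "hd K = x" using K(2) C(2) bf(2) fs(2) by simp
  have lK: "last K = y" using K(3) C(3) tlne gs(3) by (simp add: last_tl)
  have Kne: "K \<noteq> []" using K(1) path_walk walk_ne by blast
  have KL: "2 \<le> length K" using len2_of_ne[OF Kne] hK lK xy by simp
  have dK: "distinct K" using distinct_path[OF K(1)] .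
  have WK: "walk X d K" using K(1) path_walk by blast
  have Kint: "\<forall>f\<in>set K. f \<noteq> hd K \<longrightarrow> f \<noteq> last K \<longrightarrow> f \<inter> P = {}"
  proof (intro ballI impI)
    fix f assume f: "f \<in> set K" "f \<noteq> hd K" "f \<noteq> last K"
    then have "f \<in> set (butlast fs) \<or> f \<in> set (tl gs)" using K(4) C(4) by blast
    then show "f \<inter> P = {}"
    proof
      assume "f \<in> set (butlast fs)"
      then have "f \<in> set fs" "f \<noteq> h" using bf(4) fs(3) by (auto dest: in_set_butlastD)
      then show ?thesis using Ifs f hK by blast
    next
      assume "f \<in> set (tl gs)"
      moreover have "set (tl gs) \<subseteq> set gs" by (cases gs) auto
      ultimately have "f \<in> set gs" "f \<noteq> h" using hd_notin_tl[OF gs(1)] gs(2) by auto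
      then show ?thesis using Igs f lK by blast
    qed
  qed
  have K0: "K ! 0 = x" using hK Kne by (simp add: hd_conv_nth)
  have KN: "K ! (length K - 1) = y" using lK Kne by (simp add: last_conv_nth)
  have K1F: "K ! 1 \<in> F" using walk_nth[OF WK] KL by simp
  have cK01: "card (x \<inter> K ! 1) = d" using adj_01[OF K(1) KL] hK by simp
  have vK1: "v \<notin> K ! 1"
  proof (cases "K ! 1 = y")
    case True
    then show ?thesis using CL cK01 by blast
  next
    case False
    have "K ! 1 \<noteq> K ! 0" using nth_eq_iff_index_eq[OF dK, of 1 0] KL Kne by simp
    then have "K ! 1 \<noteq> hd K" using hK K0 by simp
    moreover have "K ! 1 \<noteq> last K" using False lK by simp
    moreover have "K ! 1 \<in> set K" using KL by simp
    ultimately have "K ! 1 \<inter> P = {}" using Kint by blast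
    then show ?thesis using fs(7) by blast
  qed
  have Kv: "K ! 0 - K ! 1 = {v}" using adj_diff_elem[OF xF K1F cK01 vx vK1] K0 by simp
  let ?m = "K ! (length K - 2)"
  have mF: "?m \<in> F" using walk_nth[OF WK] KL by simp
  have cm: "card (y \<inter> ?m) = d" using adj_L2[OF K(1) KL] lK by (simp add: Int_commute)
  have w2m: "w2 \<notin> ?m"
  proof (cases "?m = x")
    case True
    show ?thesis
    proof
      assume "w2 \<in> ?m"
      then have w2x: "w2 \<in> x" using True by simp
      have "v = w2"
      proof (rule ccontr)
        assume "v \<noteq> w2"
        moreover have "w2 \<in> P" using gs(8) PP by simp
        ultimately have "in_common_facet X v w2" unfolding in_common_facet_def using xF vx w2x by blast
        then show False using PV(2) fs(6) fs(7) \<open>w2 \<in> P\<close> \<open>v \<noteq> w2\<close> unfolding independent_def by blast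
      qed
      then have "v \<in> y" using w2y by simp
      moreover have "card (x \<inter> y) = d" using cm True by (simp add: Int_commute)
      ultimately show False using CL by blast
    qed
  next
    case False
    have "?m \<noteq> K ! (length K - 1)" using nth_eq_iff_index_eq[OF dK, of "length K - 2" "length K - 1"] KL Kne by simp
    then have "?m \<noteq> last K" using Kne by (simp add: last_conv_nth)
    moreover have "?m \<noteq> hd K" using False hK by simp
    moreover have "?m \<in> set K" using KL by simp
    ultimately have "?m \<inter> P = {}" using Kint by blast
    then show ?thesis using gs(8) PP by blast
  qed
  have Kw: "last K - ?m = {w2}" using adj_diff_elem[OF yF mF cm w2y w2m] lK by simp
  have Kin: "\<forall>i. 0 < i \<and> i < length K - 1 \<longrightarrow> K ! i \<inter> P = {}"
    using interior_nth[OF Kint dK] by blast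
  have "simF' X d PV x y"
    unfolding simF'_def using xF yF xy K(1) hK lK Kv Kw fs(6) fs(7) gs(8) PP Kin by blast
  then show ?thesis by simp
qed

end

context stkc begin

definition zp where "zp h Q x fs \<longleftrightarrow> path X d fs \<and> 2 \<le> length fs \<and> x \<in> hd fs \<and> x \<notin> fs ! 1 \<and>
   last fs = h \<and> hd fs \<in> Q \<and> (\<forall>f\<in>set fs. f \<noteq> hd fs \<longrightarrow> f \<noteq> last fs \<longrightarrow> f \<notin> Q) \<and> x \<notin> h"

lemma claimA:
  assumes zx: "zp h Q x fs" and zy: "zp h Q y bs" and ne: "hd fs \<noteq> hd bs" and k: "k \<in> set bs" "x \<in> k"
  shows False
proof -
  obtain j where j: "j < length bs" "bs ! j = k" using k(1) by (metis in_set_conv_nth)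
  have pb: "path X d bs" using zy unfolding zp_def by blast
  have pA: "path X d (drop j bs)" using path_drop[OF pb j(1)] .
  have hA: "hd (drop j bs) = k" using j by (simp add: hd_drop_conv_nth)
  have lA: "last (drop j bs) = last fs" using j zx zy unfolding zp_def by simp
  have fsp: "path X d fs" "2 \<le> length fs" "x \<in> hd fs" "x \<notin> fs ! 1" using zx unfolding zp_def by blast+
  obtain pre where pre: "drop j bs = pre @ fs" using GATE[OF fsp pA _ lA] hA k(2) by blast
  have fsne: "fs \<noteq> []" using fsp(2) by auto
  have "hd fs \<in> set (drop j bs)" using pre fsne by simp
  then have hb: "hd fs \<in> set bs" by (meson in_set_dropD)
  have "hd fs \<noteq> last bs" using zx zy unfolding zp_def by auto
  then have "hd fs \<notin> Q" using zy hb ne unfolding zp_def by blast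
  then show False using zx unfolding zp_def by blast
qed

lemma sideK:
  assumes zx: "zp h Q x fs" and zy: "zp h Q y bs" and ne: "hd fs \<noteq> hd bs"
    and f: "f \<in> set (butlast fs) \<union> set (butlast bs)" "f \<noteq> hd fs" "x \<in> f"
  shows False
proof (cases "f \<in> set (butlast fs)")
  case True
  obtain i where i: "i < length (butlast fs)" "butlast fs ! i = f" using True by (metis in_set_conv_nth)
  have fsp: "path X d fs" "2 \<le> length fs" "x \<in> hd fs" "x \<notin> fs ! 1" using zx unfolding zp_def by blast+
  have fi: "fs ! i = f" using i by (simp add: nth_butlast)
  have fsne: "fs \<noteq> []" using fsp(2) by auto
  have "i \<noteq> 0" using fi f(2) fsne by (metis hd_conv_nth)
  then have "x \<notin> fs ! i" using CONT2[OF fsp, of i] i by simp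
  then show False using fi f(3) by simp
next
  case False
  then have "f \<in> set bs" using f(1) by (auto dest: in_set_butlastD)
  then show False using claimA[OF zx zy ne _ f(3)] by blast
qed

lemma leafV:
  assumes n: "1 \<le> n" and zV: "z \<notin> VV n" and h: "h \<in> XX (Suc n)" "h \<notin> XX n" "z \<in> h"
    and T: "walk X d T" "c \<subseteq> last T" "set T \<subseteq> XX n" "card (h \<inter> hd T) = d"
    and PF: "partition_on F PF"
    and x: "x \<in> VV (Suc n)" and y: "y \<in> VV (Suc n)"
    and xz: "simV' X d PF x z" and zy: "simV' X d PF z y"
  shows "x = y \<or> simV' X d PF x y"
proof (cases "x = y")
  case True then show ?thesis by simp
next
  case False
  note xy = False
  let ?r = "h \<inter> hd T"
  have hF: "h \<in> F" using h(1) XX_sub by blast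
  obtain fs Q where fs0: "x \<in> vertices X" "\<not> in_common_facet X x z" "path_between X d {x} fs {z}"
    "Q \<in> PF" "hd fs \<in> Q" "last fs \<in> Q" "\<forall>i. 0 < i \<and> i < length fs - 1 \<longrightarrow> fs ! i \<notin> Q"
    using xz unfolding simV'_def by blast
  obtain gs Q2 where gs0: "y \<in> vertices X" "\<not> in_common_facet X z y" "path_between X d {z} gs {y}"
    "Q2 \<in> PF" "hd gs \<in> Q2" "last gs \<in> Q2" "\<forall>i. 0 < i \<and> i < length gs - 1 \<longrightarrow> gs ! i \<notin> Q2"
    using zy unfolding simV'_def by blast
  have fs: "path X d fs" "x \<in> hd fs" "z \<in> last fs"
    "2 \<le> length fs \<longrightarrow> \<not> {x} \<subseteq> fs ! 0 \<inter> fs ! 1 \<and> \<not> {z} \<subseteq> last fs \<inter> fs ! (length fs - 2)"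
    using fs0(3) unfolding path_between_def by auto
  have gs: "path X d gs" "z \<in> hd gs" "y \<in> last gs"
    "2 \<le> length gs \<longrightarrow> \<not> {z} \<subseteq> gs ! 0 \<inter> gs ! 1 \<and> \<not> {y} \<subseteq> last gs \<inter> gs ! (length gs - 2)"
    using gs0(3) unfolding path_between_def by auto
  have ncxz: "\<And>f. f \<in> F \<Longrightarrow> x \<in> f \<Longrightarrow> z \<in> f \<Longrightarrow> False" using fs0(2) unfolding in_common_facet_def by blast
  have ncyz: "\<And>f. f \<in> F \<Longrightarrow> y \<in> f \<Longrightarrow> z \<in> f \<Longrightarrow> False" using gs0(2) unfolding in_common_facet_def by blast
  have ncyz': "\<not> in_common_facet X y z" using ncyz unfolding in_common_facet_def by blast
  have fsne: "fs \<noteq> []" using fs(1) path_walk walk_ne by blast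
  have gsne: "gs \<noteq> []" using gs(1) path_walk walk_ne by blast
  have L: "2 \<le> length fs"
  proof (rule len2_of_ne[OF fsne])
    show "hd fs \<noteq> last fs" using ncxz fs(2,3) walk_hd[OF path_walk[OF fs(1)]] by metis
  qed
  have M: "2 \<le> length gs"
  proof (rule len2_of_ne[OF gsne])
    show "hd gs \<noteq> last gs" using ncyz gs(2,3) walk_hd[OF path_walk[OF gs(1)]] by metis
  qed
  have f0: "fs ! 0 = hd fs" using fsne by (simp add: hd_conv_nth)
  have g0: "gs ! 0 = hd gs" using gsne by (simp add: hd_conv_nth)
  have x1: "x \<notin> fs ! 1" using fs(4) L fs(2) f0 by auto
  have z2: "z \<notin> fs ! (length fs - 2)" using fs(4) L fs(3) by auto
  have z1: "z \<notin> gs ! 1" using gs(4) M gs(2) g0 by auto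
  have y2: "y \<notin> gs ! (length gs - 2)" using gs(4) M gs(3) by auto
  have GZf: "last fs = h \<and> fs ! (length fs - 2) \<inter> h = ?r"
    using GZ[OF n h zV T x fs0(2) fs(1) L fs(2) fs(3) z2] .
  define bs where "bs = rev gs"
  have bp: "path X d bs" using gs(1) path_rev unfolding bs_def by simp
  have bL: "2 \<le> length bs" using M unfolding bs_def by simp
  have bne: "bs \<noteq> []" using gsne unfolding bs_def by simp
  have bh: "hd bs = last gs" unfolding bs_def using gsne by (simp add: hd_rev)
  have bl: "last bs = hd gs" unfolding bs_def using gsne by (simp add: last_rev)
  have b1: "bs ! 1 = gs ! (length gs - 2)" unfolding bs_def using rev_nth1[OF M] .
  have b2: "bs ! (length bs - 2) = gs ! 1" unfolding bs_def using hd_rev_nth[OF M] by simp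
  have GZb: "last bs = h \<and> bs ! (length bs - 2) \<inter> h = ?r"
    using GZ[OF n h zV T y ncyz' bp bL] bh gs(3) bl gs(2) b2 z1 by simp
  have hQ: "h \<in> Q" using GZf fs0(6) by simp
  have hQ2: "h \<in> Q2" using GZb bl gs0(5) by simp
  have QQ: "Q2 = Q" using partition_same[OF PF gs0(4) fs0(4) hQ2 hQ] .
  have xh: "x \<notin> h" using ncxz hF h(3) by blast
  have yh: "y \<notin> h" using ncyz hF h(3) by blast
  have zx: "zp h Q x fs"
    unfolding zp_def using fs(1) L fs(2) x1 GZf fs0(5) xh
      interior_set[of fs "\<lambda>f. f \<notin> Q"] fs0(7) by blast
  have intb: "\<forall>f\<in>set bs. f \<noteq> hd bs \<longrightarrow> f \<noteq> last bs \<longrightarrow> f \<notin> Q"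
  proof (intro ballI impI)
    fix f assume f: "f \<in> set bs" "f \<noteq> hd bs" "f \<noteq> last bs"
    then have "f \<in> set gs" "f \<noteq> last gs" "f \<noteq> hd gs" using bh bl unfolding bs_def by auto
    then show "f \<notin> Q" using interior_set[of gs "\<lambda>f. f \<notin> Q2"] gs0(7) QQ by blast
  qed
  have zy': "zp h Q y bs"
    unfolding zp_def using bp bL bh gs(3) b1 y2 GZb gs0(6) QQ intb yh by auto
  have nc: "\<not> in_common_facet X x y"
  proof
    assume "in_common_facet X x y"
    then obtain e where e: "e \<in> F" "x \<in> e" "y \<in> e" unfolding in_common_facet_def by blast
    show False
    proof (cases "hd fs = hd bs")
      case True
      have "last fs = last bs" using GZf GZb by simp
      then have fb: "fs = bs" using UP[OF fs(1) bp True] by simp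
      have hfF: "hd fs \<in> F" using walk_hd[OF path_walk[OF fs(1)]] .
      have f1F: "fs ! 1 \<in> F" using walk_nth[OF path_walk[OF fs(1)]] L by simp
      obtain u where u: "hd fs - fs ! 1 = {u}" using adj_diff[OF hfF f1F adj_01[OF fs(1) L]] by blast
      have "x \<in> hd fs - fs ! 1" using fs(2) x1 by blast
      moreover have "y \<in> hd fs - fs ! 1" using True bh gs(3) fb b1 y2 by simp
      ultimately show False using u xy by (metis singletonD)
    next
      case False
      have hfF: "hd fs \<in> F" using walk_hd[OF path_walk[OF fs(1)]] .
      obtain S where S: "walk X d S" "hd S = e" "last S = hd fs" "\<forall>f\<in>set S. x \<in> f"
        using SW[OF e(1) e(2) hfF fs(2)] by blast
      obtain C where C: "walk X d C" "hd C = hd S" "last C = last fs"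
        using walk_join[OF S(1) path_walk[OF fs(1)]] S(3) by metis
      obtain A where A: "path X d A" "hd A = hd C" "last A = last C" using RED[OF C(1)] by blast
      obtain pre1 where p1: "A = pre1 @ fs" using GATE[OF fs(1) L fs(2) x1 A(1)] A(2,3) C(2,3) S(2) e(2) by auto
      have yb: "y \<in> hd bs" using bh gs(3) by simp
      have yb1: "y \<notin> bs ! 1" using b1 y2 by simp
      have yA: "y \<in> hd A" using A(2) C(2) S(2) e(3) by simp
      have lAb: "last A = last bs" using A(3) C(3) GZf GZb by simp
      obtain pre2 where p2: "A = pre2 @ bs" using GATE[OF bp bL yb yb1 A(1) yA lAb] by blast
      have "hd fs \<in> set bs \<or> hd bs \<in> set fs" using suffix_dich[of pre1 fs pre2 bs] p1 p2 fsne bne by simp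
      then show False
      proof
        assume "hd fs \<in> set bs"
        then show False using claimA[OF zx zy' False _ fs(2)] by blast
      next
        assume "hd bs \<in> set fs"
        moreover have "y \<in> hd bs" using bh gs(3) by simp
        ultimately show False using claimA[OF zy' zx] False by metis
      qed
    qed
  qed
  have hfb: "hd fs \<noteq> hd bs"
  proof
    assume "hd fs = hd bs"
    then have "y \<in> hd fs" using bh gs(3) by simp
    then show False using nc fs(2) walk_hd[OF path_walk[OF fs(1)]] unfolding in_common_facet_def by blast
  qed
  note bf = butlast_facts[OF fs(1) L]
  note bb = butlast_facts[OF bp bL]
  have bbne: "butlast bs \<noteq> []" using bL by (cases bs) auto
  have wB: "walk X d (rev (butlast bs))" using bb(1) walk_rev by simp
  have hB: "hd (rev (butlast bs)) = bs ! (length bs - 2)" using bb(3) bbne by (simp add: hd_rev)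
  have lB: "last (rev (butlast bs)) = hd bs" using bb(2) bbne by (simp add: last_rev)
  have rA: "?r \<subseteq> last (butlast fs)" using bf(3) GZf by blast
  have rB: "?r \<subseteq> hd (rev (butlast bs))" using hB GZb by blast
  obtain C where C: "walk X d C" "hd C = hd (butlast fs)" "last C = last (rev (butlast bs))"
    "set C \<subseteq> set (butlast fs) \<union> set (rev (butlast bs))"
    using walk_join_ridge[OF bf(1) wB rA rB] T(4) by blast
  obtain K where K: "path X d K" "hd K = hd C" "last K = last C" "set K \<subseteq> set C" using RED[OF C(1)] by blast
  have hK: "hd K = hd fs" using K(2) C(2) bf(2) by simp
  have lK: "last K = hd bs" using K(3) C(3) lB by simp
  have sK: "set K \<subseteq> set (butlast fs) \<union> set (butlast bs)" using K(4) C(4) by auto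
  have Kne: "K \<noteq> []" using K(1) path_walk walk_ne by blast
  have KL: "2 \<le> length K" using len2_of_ne[OF Kne] hK lK hfb by simp
  have dK: "distinct K" using distinct_path[OF K(1)] .
  have Kint: "\<forall>f\<in>set K. f \<noteq> hd K \<longrightarrow> f \<noteq> last K \<longrightarrow> f \<notin> Q"
  proof (intro ballI impI)
    fix f assume f: "f \<in> set K" "f \<noteq> hd K" "f \<noteq> last K"
    then have "f \<in> set (butlast fs) \<or> f \<in> set (butlast bs)" using sK by blast
    then show "f \<notin> Q"
    proof
      assume "f \<in> set (butlast fs)"
      then have "f \<in> set fs" "f \<noteq> last fs" using bf(4) by (auto dest: in_set_butlastD)
      then show ?thesis using zx f(2) hK unfolding zp_def by blast
    next
      assume "f \<in> set (butlast bs)"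
      then have "f \<in> set bs" "f \<noteq> last bs" using bb(4) by (auto dest: in_set_butlastD)
      then show ?thesis using zy' f(3) lK unfolding zp_def by blast
    qed
  qed
  have K0: "K ! 0 = hd fs" using hK Kne by (simp add: hd_conv_nth)
  have xK1: "x \<notin> K ! 1"
  proof
    assume xk: "x \<in> K ! 1"
    have "K ! 1 \<noteq> K ! 0" using nth_eq_iff_index_eq[OF dK, of 1 0] KL Kne by simp
    then have "K ! 1 \<noteq> hd fs" using K0 by simp
    moreover have "K ! 1 \<in> set (butlast fs) \<union> set (butlast bs)" using sK KL by (meson nth_mem subsetD less_le_trans one_less_numeral_iff semiring_norm(76))
    ultimately show False using sideK[OF zx zy' hfb _ _ xk] by blast
  qed
  have yK2: "y \<notin> K ! (length K - 2)"
  proof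
    assume yk: "y \<in> K ! (length K - 2)"
    have "K ! (length K - 2) \<noteq> K ! (length K - 1)"
      using nth_eq_iff_index_eq[OF dK, of "length K - 2" "length K - 1"] KL Kne by simp
    then have "K ! (length K - 2) \<noteq> hd bs" using lK Kne by (simp add: last_conv_nth)
    moreover have "K ! (length K - 2) \<in> set K" using KL by simp
    then have "K ! (length K - 2) \<in> set (butlast bs) \<union> set (butlast fs)" using sK by blast
    ultimately show False using sideK[OF zy' zx hfb[symmetric] _ _ yk] by blast
  qed
  have Kin: "\<forall>i. 0 < i \<and> i < length K - 1 \<longrightarrow> K ! i \<notin> Q"
    using interior_nth[OF Kint dK] by blast
  have pb: "path_between X d {x} K {y}"
    unfolding path_between_def using K(1) hK lK fs(2) gs(3) bh xK1 yK2 K0 by auto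
  have hKQ: "hd K \<in> Q" using hK fs0(5) by simp
  have lKQ: "last K \<in> Q" using lK bh gs0(6) QQ by simp
  have "\<exists>Q\<in>PF. hd K \<in> Q \<and> last K \<in> Q \<and> (\<forall>i. 0 < i \<and> i < length K - 1 \<longrightarrow> K ! i \<notin> Q)"
    using fs0(4) hKQ lKQ Kin by blast
  then have ex: "\<exists>fs. path_between X d {x} fs {y} \<and> (\<exists>Q\<in>PF. hd fs \<in> Q \<and> last fs \<in> Q \<and> (\<forall>i. 0 < i \<and> i < length fs - 1 \<longrightarrow> fs ! i \<notin> Q))"
    using pb by blast
  have "simV' X d PF x y"
    unfolding simV'_def using fs0(1) gs0(1) xy nc ex by blast
  then show ?thesis by simp
qed

end

definition rr :: "('b \<Rightarrow> 'b \<Rightarrow> bool) \<Rightarrow> 'b set \<Rightarrow> 'b \<Rightarrow> 'b \<Rightarrow> bool" where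
  "rr R A = (\<lambda>a b. a \<in> A \<and> b \<in> A \<and> R a b)"

lemma rr_mono: "A \<subseteq> B \<Longrightarrow> (rr R A)\<^sup>*\<^sup>* a b \<Longrightarrow> (rr R B)\<^sup>*\<^sup>* a b"
proof -
  assume "A \<subseteq> B" "(rr R A)\<^sup>*\<^sup>* a b"
  moreover have "rr R A \<le> rr R B" using \<open>A \<subseteq> B\<close> unfolding rr_def by auto
  ultimately show ?thesis using rtranclp_mono by blast
qed

lemma remove_elem:
  assumes ab: "(rr R A)\<^sup>*\<^sup>* a b" and a: "a \<noteq> h" and b: "b \<noteq> h" and irr: "\<not> R h h"
    and pr: "\<forall>x y. x \<in> A - {h} \<longrightarrow> y \<in> A - {h} \<longrightarrow> R x h \<longrightarrow> R h y \<longrightarrow> x = y \<or> R x y"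
  shows "(rr R (A - {h}))\<^sup>*\<^sup>* a b"
proof -
  have "(b \<noteq> h \<longrightarrow> (rr R (A - {h}))\<^sup>*\<^sup>* a b) \<and> (b = h \<longrightarrow> (\<exists>x. (rr R (A - {h}))\<^sup>*\<^sup>* a x \<and> x \<in> A - {h} \<and> R x h))"
    using ab
  proof (induction rule: rtranclp_induct)
    case base then show ?case using a by simp
  next
    case (step y z)
    have yz: "y \<in> A" "z \<in> A" "R y z" using step.hyps(2) unfolding rr_def by auto
    show ?case
    proof (cases "z = h")
      case True
      then have "y \<noteq> h" using irr yz(3) by auto
      then have "(rr R (A - {h}))\<^sup>*\<^sup>* a y" using step.IH by blast
      then show ?thesis using True yz \<open>y \<noteq> h\<close> by blast
    next
      case False
      show ?thesis
      proof (cases "y = h")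
        case True
        then obtain x where x: "(rr R (A - {h}))\<^sup>*\<^sup>* a x" "x \<in> A - {h}" "R x h" using step.IH by blast
        have "x = z \<or> R x z" using pr x(2,3) yz(2,3) True False by blast
        then show ?thesis
        proof
          assume "x = z" then show ?thesis using x(1) False by simp
        next
          assume "R x z"
          then have "rr R (A - {h}) x z" using x(2) yz(2) False unfolding rr_def by simp
          then show ?thesis using x(1) False by (meson rtranclp.rtrancl_into_rtrancl)
        qed
      next
        case False2: False
        have "(rr R (A - {h}))\<^sup>*\<^sup>* a y" using step.IH False2 by blast
        moreover have "rr R (A - {h}) y z" using yz False False2 unfolding rr_def by simp
        ultimately show ?thesis using False by (meson rtranclp.rtrancl_into_rtrancl)
      qed
    qed
  qed
  then show ?thesis using b by blast
qed

lemma remove_finite: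
  assumes fin: "finite H" and disj: "H \<inter> S = {}" and HU: "S \<union> H \<subseteq> U"
    and irr: "\<forall>h. \<not> R h h"
    and pr: "\<forall>h\<in>H. \<forall>x y. x \<in> U - {h} \<longrightarrow> y \<in> U - {h} \<longrightarrow> R x h \<longrightarrow> R h y \<longrightarrow> x = y \<or> R x y"
    and ab: "a \<in> S" "b \<in> S"
  shows "(rr R (S \<union> H))\<^sup>*\<^sup>* a b \<Longrightarrow> (rr R S)\<^sup>*\<^sup>* a b"
  using fin disj HU pr
proof (induction H rule: finite_induct)
  case empty then show ?case by simp
next
  case (insert h H)
  have hS: "h \<notin> S" using insert.prems(2) by blast
  have eq: "(S \<union> insert h H) - {h} = S \<union> H" using insert.hyps(2) hS by blast
  have "(rr R ((S \<union> insert h H) - {h}))\<^sup>*\<^sup>* a b"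
  proof (rule remove_elem[OF insert.prems(1)])
    show "a \<noteq> h" using ab hS by blast
    show "b \<noteq> h" using ab hS by blast
    show "\<not> R h h" using irr by blast
    show "\<forall>x y. x \<in> S \<union> insert h H - {h} \<longrightarrow> y \<in> S \<union> insert h H - {h} \<longrightarrow> R x h \<longrightarrow> R h y \<longrightarrow> x = y \<or> R x y"
      using insert.prems(3,4) by blast
  qed
  then have "(rr R (S \<union> H))\<^sup>*\<^sup>* a b" using eq by simp
  then show ?case using insert.IH insert.prems by blast
qed

lemma level_reduce:
  assumes mono: "\<forall>n\<ge>m. S n \<subseteq> S (Suc n)" and fin: "\<forall>n\<ge>m. finite (S (Suc n) - S n)"
    and pr: "\<forall>n\<ge>m. \<forall>h\<in>S (Suc n) - S n. \<forall>x y. x \<in> S (Suc n) - {h} \<longrightarrow> y \<in> S (Suc n) - {h} \<longrightarrow> R x h \<longrightarrow> R h y \<longrightarrow> x = y \<or> R x y"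
    and irr: "\<forall>h. \<not> R h h" and ab: "a \<in> S m" "b \<in> S m"
  shows "(rr R (S (m + k)))\<^sup>*\<^sup>* a b \<Longrightarrow> (rr R (S m))\<^sup>*\<^sup>* a b"
proof (induction k)
  case 0 then show ?case by simp
next
  case (Suc k)
  let ?N = "m + k"
  have subN: "S m \<subseteq> S ?N"
  proof (induction k)
    case (Suc k) then show ?case using mono by (metis add_Suc_right le_add1 order_trans)
  qed simp
  have mN: "m \<le> ?N" by simp
  have sN: "S ?N \<subseteq> S (Suc ?N)" using mono mN by blast
  have eq: "S (Suc ?N) = S ?N \<union> (S (Suc ?N) - S ?N)" using sN by blast
  have r0: "(rr R (S ?N \<union> (S (Suc ?N) - S ?N)))\<^sup>*\<^sup>* a b" using Suc.prems eq by simp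
  have "(rr R (S ?N))\<^sup>*\<^sup>* a b"
  proof (rule remove_finite[of "S (Suc ?N) - S ?N" "S ?N" "S (Suc ?N)" R a b])
    show "finite (S (Suc ?N) - S ?N)" using fin mN by blast
    show "(S (Suc ?N) - S ?N) \<inter> S ?N = {}" by blast
    show "S ?N \<union> (S (Suc ?N) - S ?N) \<subseteq> S (Suc ?N)" using sN by blast
    show "\<forall>h. \<not> R h h" using irr .
    show "\<forall>h\<in>S (Suc ?N) - S ?N. \<forall>x y. x \<in> S (Suc ?N) - {h} \<longrightarrow> y \<in> S (Suc ?N) - {h} \<longrightarrow> R x h \<longrightarrow> R h y \<longrightarrow> x = y \<or> R x y"
      using pr mN by blast
    show "a \<in> S ?N" "b \<in> S ?N" using ab subN by blast+
    show "(rr R (S ?N \<union> (S (Suc ?N) - S ?N)))\<^sup>*\<^sup>* a b" using r0 .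
  qed
  then show ?case using Suc.IH by simp
qed

lemma chain_from:
  assumes "a \<in> A" "(rr R A)\<^sup>*\<^sup>* a b"
  shows "chain_in R A a b"
  using assms(2)
proof (induction rule: rtranclp_induct)
  case base
  then show ?case unfolding chain_in_def using assms(1) by (intro exI[of _ "[a]"]) simp
next
  case (step y z)
  obtain xs where xs: "xs \<noteq> []" "hd xs = a" "last xs = y" "set xs \<subseteq> A"
    "\<forall>i. Suc i < length xs \<longrightarrow> R (xs ! i) (xs ! Suc i)" using step.IH unfolding chain_in_def by blast
  have yz: "z \<in> A" "R y z" using step.hyps(2) unfolding rr_def by auto
  have "\<forall>i. Suc i < length (xs @ [z]) \<longrightarrow> R ((xs @ [z]) ! i) ((xs @ [z]) ! Suc i)"
  proof (intro allI impI)
    fix i assume i: "Suc i < length (xs @ [z])"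
    show "R ((xs @ [z]) ! i) ((xs @ [z]) ! Suc i)"
    proof (cases "Suc i < length xs")
      case True then show ?thesis using xs(5) by (simp add: nth_append)
    next
      case False
      then have "i = length xs - 1" using i by simp
      then have "(xs @ [z]) ! i = y" "(xs @ [z]) ! Suc i = z" using xs(1,3) False
        by (auto simp: nth_append last_conv_nth)
      then show ?thesis using yz by simp
    qed
  qed
  then show ?case unfolding chain_in_def using xs yz by (intro exI[of _ "xs @ [z]"]) auto
qed

lemma gen_equiv_rr:
  assumes sym: "\<forall>x y. R x y \<longrightarrow> R y x" and dom: "\<forall>x y. R x y \<longrightarrow> x \<in> U \<and> y \<in> U" and g: "gen_equiv R a b"
  shows "(rr R U)\<^sup>*\<^sup>* a b"
proof -
  have "(\<lambda>x y. R x y \<or> R y x) \<le> rr R U" using sym dom unfolding rr_def by auto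
  then show ?thesis using g unfolding gen_equiv_def using rtranclp_mono by blast
qed


context stkc begin

lemma rev_interior:
  assumes "\<forall>i. 0 < i \<and> i < length fs - 1 \<longrightarrow> P (fs ! i)"
  shows "\<forall>i. 0 < i \<and> i < length (rev fs) - 1 \<longrightarrow> P (rev fs ! i)"
proof (intro allI impI)
  fix i assume i: "0 < i \<and> i < length (rev fs) - 1"
  then have il: "i < length fs" by (simp add: less_diff_conv)
  then have "rev fs ! i = fs ! (length fs - Suc i)" by (simp add: rev_nth)
  moreover have "0 < length fs - Suc i \<and> length fs - Suc i < length fs - 1" using i by auto
  ultimately show "P (rev fs ! i)" using assms by simp
qed

lemma simF'_sym: assumes "simF' X d PV f g" shows "simF' X d PV g f"
proof -
  obtain fs v w P where fs: "f \<in> F" "g \<in> F" "f \<noteq> g" "path X d fs" "hd fs = f" "last fs = g" "fs ! 0 - fs ! 1 = {v}"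
    "last fs - fs ! (length fs - 2) = {w}" "P \<in> PV" "v \<in> P" "w \<in> P"
    "\<forall>i. 0 < i \<and> i < length fs - 1 \<longrightarrow> fs ! i \<inter> P = {}"
    using assms unfolding simF'_def by blast
  have fsne: "fs \<noteq> []" using fs(4) path_walk walk_ne by blast
  have L: "2 \<le> length fs" using len2_of_ne[OF fsne] fs(3,5,6) by simp
  let ?gs = "rev fs"
  have "path X d ?gs" using fs(4) path_rev by simp
  moreover have "hd ?gs = g" "last ?gs = f" using fs(5,6) fsne by (simp_all add: hd_rev last_rev)
  moreover have "?gs ! 0 - ?gs ! 1 = {w}"
    using fs(8) rev_nth1[OF L] fsne by (simp add: rev_nth last_conv_nth)
  moreover have "last ?gs - ?gs ! (length ?gs - 2) = {v}"
    using fs(7) hd_rev_nth[OF L] fsne by (simp add: last_rev hd_conv_nth)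
  moreover have "\<forall>i. 0 < i \<and> i < length ?gs - 1 \<longrightarrow> ?gs ! i \<inter> P = {}"
    using rev_interior[OF fs(12)] .
  ultimately show ?thesis unfolding simF'_def using fs(1-3,9-11) by blast
qed

lemma simV'_sym: assumes "simV' X d PF v w" shows "simV' X d PF w v"
proof -
  obtain fs Q where fs: "v \<in> vertices X" "w \<in> vertices X" "v \<noteq> w" "\<not> in_common_facet X v w"
    "path_between X d {v} fs {w}" "Q \<in> PF" "hd fs \<in> Q" "last fs \<in> Q"
    "\<forall>i. 0 < i \<and> i < length fs - 1 \<longrightarrow> fs ! i \<notin> Q"
    using assms unfolding simV'_def by blast
  have pb: "path X d fs" "v \<in> hd fs" "w \<in> last fs"
    "2 \<le> length fs \<longrightarrow> \<not> {v} \<subseteq> fs ! 0 \<inter> fs ! 1 \<and> \<not> {w} \<subseteq> last fs \<inter> fs ! (length fs - 2)"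
    using fs(5) unfolding path_between_def by auto
  have fsne: "fs \<noteq> []" using pb(1) path_walk walk_ne by blast
  let ?gs = "rev fs"
  have "path_between X d {w} ?gs {v}"
    unfolding path_between_def
  proof (intro conjI impI)
    show "path X d ?gs" using pb(1) path_rev by simp
    show "{w} \<subseteq> hd ?gs" using pb(3) fsne by (simp add: hd_rev)
    show "{v} \<subseteq> last ?gs" using pb(2) fsne by (simp add: last_rev)
    assume L': "2 \<le> length ?gs"
    then have L: "2 \<le> length fs" by simp
    have "?gs ! 0 = last fs" using fsne by (simp add: rev_nth last_conv_nth)
    then show "\<not> {w} \<subseteq> ?gs ! 0 \<inter> ?gs ! 1" using pb(4) L rev_nth1[OF L] by (simp add: Int_commute)
    have "fs ! 0 = hd fs" using fsne by (simp add: hd_conv_nth)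
    then show "\<not> {v} \<subseteq> last ?gs \<inter> ?gs ! (length ?gs - 2)"
      using pb(4) L hd_rev_nth[OF L] fsne by (simp add: last_rev Int_commute)
  qed
  moreover have "hd ?gs \<in> Q" "last ?gs \<in> Q" using fs(7,8) fsne by (simp_all add: hd_rev last_rev)
  moreover have "\<forall>i. 0 < i \<and> i < length ?gs - 1 \<longrightarrow> ?gs ! i \<notin> Q"
    using rev_interior[OF fs(9)] .
  moreover have "\<not> in_common_facet X w v" using fs(4) unfolding in_common_facet_def by blast
  ultimately show ?thesis unfolding simV'_def using fs(1-3,6) by blast
qed

lemma simF'_dom: "simF' X d PV f g \<Longrightarrow> f \<in> F \<and> g \<in> F" unfolding simF'_def by blast
lemma simV'_dom: "simV' X d PF f g \<Longrightarrow> f \<in> vertices X \<and> g \<in> vertices X" unfolding simV'_def by blast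

lemma finF: "finite F" using finX by (simp add: facets_def)
lemma finV: "finite (vertices X)" using finU by (simp add: vertices_def)

lemma partF:
  assumes PV: "partition_on (vertices X) PV" "\<forall>P\<in>PV. independent X P"
    and fg: "f \<in> XX m" "g \<in> XX m" "gen_equiv (simF' X d PV) f g"
  shows "chain_in (simF' X d PV) (XX m) f g"
proof -
  let ?R = "simF' X d PV"
  have m: "1 \<le> m" using fg(1) XX0 by (cases m) auto
  have r1: "(rr ?R F)\<^sup>*\<^sup>* f g"
    using gen_equiv_rr[of ?R F] simF'_sym simF'_dom fg(3) by blast
  obtain N where N: "F \<subseteq> XX N" using XX_all by blast
  have "XX N \<subseteq> XX (m + N)" using XX_mono by simp
  then have r2: "(rr ?R (XX (m + N)))\<^sup>*\<^sup>* f g" using rr_mono[OF _ r1] N XX_sub by blast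
  have "(rr ?R (XX m))\<^sup>*\<^sup>* f g"
  proof (rule level_reduce[of m XX ?R f g N])
    show "\<forall>n\<ge>m. XX n \<subseteq> XX (Suc n)" using XX_mono by simp
    show "\<forall>n\<ge>m. finite (XX (Suc n) - XX n)" using finF XX_sub by (meson finite_Diff finite_subset)
    show "\<forall>h. \<not> ?R h h" unfolding simF'_def by blast
    show "f \<in> XX m" "g \<in> XX m" using fg by blast+
    show "(rr ?R (XX (m + N)))\<^sup>*\<^sup>* f g" using r2 .
    show "\<forall>n\<ge>m. \<forall>h\<in>XX (Suc n) - XX n. \<forall>x y. x \<in> XX (Suc n) - {h} \<longrightarrow> y \<in> XX (Suc n) - {h} \<longrightarrow> ?R x h \<longrightarrow> ?R h y \<longrightarrow> x = y \<or> ?R x y"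
    proof (intro allI impI ballI)
      fix n h x y
      assume n: "m \<le> n" and h: "h \<in> XX (Suc n) - XX n" and x: "x \<in> XX (Suc n) - {h}" and y: "y \<in> XX (Suc n) - {h}"
        and xh: "?R x h" and hy: "?R h y"
      have n1: "1 \<le> n" using m n by simp
      obtain T where T: "walk X d T" "c \<subseteq> last T" "set T \<subseteq> XX n" "card (h \<inter> hd T) = d"
        using level_facet[OF n1] h by blast
      show "x = y \<or> ?R x y"
        using leafF[OF n1 _ _ T PV _ _ _ _ xh hy] h x y by blast
    qed
  qed
  then show ?thesis by (rule chain_from[OF fg(1)])
qed

lemma partV_pos:
  assumes PF: "partition_on F PF" and m: "1 \<le> m"
    and vw: "v \<in> VV m" "w \<in> VV m" "gen_equiv (simV' X d PF) v w"
  shows "(rr (simV' X d PF) (VV m))\<^sup>*\<^sup>* v w"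
proof -
  let ?R = "simV' X d PF"
  have r1: "(rr ?R (vertices X))\<^sup>*\<^sup>* v w"
    using gen_equiv_rr[of ?R "vertices X"] simV'_sym simV'_dom vw(3) by blast
  obtain N where N: "1 \<le> N" "vertices X \<subseteq> VV N" using VV_all by blast
  have "VV N \<subseteq> VV (m + N)" using VV_mono N(1) by simp
  then have r2: "(rr ?R (VV (m + N)))\<^sup>*\<^sup>* v w" using rr_mono[OF _ r1] N(2) by blast
  show ?thesis
  proof (rule level_reduce[of m VV ?R v w N])
    show "\<forall>n\<ge>m. VV n \<subseteq> VV (Suc n)" using VV_mono m by simp
    have "\<forall>n\<ge>m. VV (Suc n) \<subseteq> vertices X"
      using VV_eq XX_sub facet_sub_vertices by fastforce
    then show "\<forall>n\<ge>m. finite (VV (Suc n) - VV n)" using finV by (meson finite_Diff finite_subset)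
    show "\<forall>h. \<not> ?R h h" unfolding simV'_def by blast
    show "v \<in> VV m" "w \<in> VV m" using vw by blast+
    show "(rr ?R (VV (m + N)))\<^sup>*\<^sup>* v w" using r2 .
    show "\<forall>n\<ge>m. \<forall>z\<in>VV (Suc n) - VV n. \<forall>x y. x \<in> VV (Suc n) - {z} \<longrightarrow> y \<in> VV (Suc n) - {z} \<longrightarrow> ?R x z \<longrightarrow> ?R z y \<longrightarrow> x = y \<or> ?R x y"
    proof (intro allI impI ballI)
      fix n z x y
      assume n: "m \<le> n" and z: "z \<in> VV (Suc n) - VV n" and x: "x \<in> VV (Suc n) - {z}" and y: "y \<in> VV (Suc n) - {z}"
        and xz: "?R x z" and zy: "?R z y"
      have n1: "1 \<le> n" using m n by simp
      obtain h where h: "h \<in> XX (Suc n)" "z \<in> h" using z VV_eq[of "Suc n"] by auto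
      have hn: "h \<notin> XX n" using h(2) z XX_sub_V[OF n1] by blast
      obtain T where T: "walk X d T" "c \<subseteq> last T" "set T \<subseteq> XX n" "card (h \<inter> hd T) = d"
        using level_facet[OF n1 h(1) hn] by blast
      have zV: "z \<notin> VV n" using z by blast
      show "x = y \<or> ?R x y"
        using leafV[OF n1 zV h(1) hn h(2) T PF _ _ xz zy] x y by blast
    qed
  qed
qed

lemma partV:
  assumes PF: "partition_on F PF"
    and vw: "v \<in> VV m" "w \<in> VV m" "v \<noteq> w" "gen_equiv (simV' X d PF) v w"
  shows "chain_in (simV' X d PF) (VV m) v w"
proof (cases "m = 0")
  case False
  then have "1 \<le> m" by simp
  then show ?thesis using chain_from[OF vw(1) partV_pos[OF PF _ vw(1,2,4)]] by blast
next
  case True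
  let ?R = "simV' X d PF"
  obtain e where e: "e \<in> F" "c \<subseteq> e" using c_facet by blast
  have e1: "e \<in> XX 1" unfolding XX_iff using e by (intro conjI exI[of _ "[e]"]) auto
  have cV: "c \<subseteq> VV 1" using e1 e(2) XX_sub_V[of 1] by auto
  have v0: "v \<in> c" "w \<in> c" using vw True unfolding Vm_def by auto
  have "(rr ?R (VV 1))\<^sup>*\<^sup>* v w" using partV_pos[OF PF _ _ _ vw(4)] v0 cV by blast
  then obtain u where u: "rr ?R (VV 1) v u" using vw(3) by (metis converse_rtranclpE)
  then have uV: "u \<in> VV 1" "?R v u" unfolding rr_def by auto
  obtain f where f: "f \<in> XX 1" "u \<in> f" using uV(1) VV_eq[of 1] by auto
  obtain W where W: "walk X d W" "length W \<le> 1" "hd W = f" "c \<subseteq> last W" using f(1) unfolding XX_iff by blast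
  have "W = [f]" using W walk_ne[OF W(1)] by (cases W) auto
  then have "c \<subseteq> f" using W(4) by simp
  then have "in_common_facet X v u" unfolding in_common_facet_def using f XX_sub v0(1) by blast
  then show ?thesis using uV(2) unfolding simV'_def by blast
qed

end

theorem lemma3p5:
  fixes X :: "'a set set" and d m :: nat and c :: "'a set"
  assumes "stacked X d" and "codim_one_face X d c"
  shows "(\<forall>PF v w. partition_on (facets X) PF \<longrightarrow>
            v \<in> Vm X d c m \<longrightarrow> w \<in> Vm X d c m \<longrightarrow> v \<noteq> w \<longrightarrow>
            gen_equiv (simV' X d PF) v w \<longrightarrow>
            chain_in (simV' X d PF) (Vm X d c m) v w)
       \<and> (\<forall>PV f g. partition_on (vertices X) PV \<longrightarrow> (\<forall>P\<in>PV. independent X P) \<longrightarrow>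
            f \<in> Xm X d c m \<longrightarrow> g \<in> Xm X d c m \<longrightarrow> f \<noteq> g \<longrightarrow>
            gen_equiv (simF' X d PV) f g \<longrightarrow>
            chain_in (simF' X d PV) (Xm X d c m) f g)"
proof -
  interpret stkc X d c
    using assms unfolding codim_one_face_def by (unfold_locales) auto
  show ?thesis using partV partF by blast
qed


end
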